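(* For any Poisson $H$-pseudoalgebra $V$ and $a_1,\dots,a_m,b_1,\dots,b_n\in V$, $[(a_1\cdots a_m)*(b_1\cdots b_n)]=\sum_{i=1}^m\sum_{j=1}^n\epsilon_{ij}\,(a_1\cdots a_{i-1}a_{i+1}\cdots a_m)\,[a_i*b_j]\,(b_1\cdots b_{j-1}b_{j+1}\cdots b_n)$, where $\epsilon_{ij}=(-1)^{p(a_i)(p(a_{i+1})+\dots+p(a_m))+p(b_j)(p(b_1)+\dots+p(b_{j-1}))}$.
   Context: $H$ is a cocommutative Hopf algebra over a field $\mathbb F$ of characteristic $0$ (purely even), coproduct $\Delta(h)=h_{(1)}\otimes h_{(2)}$, antipode $S$, $h_{(1)}\otimes h_{(-2)}:=(\mathrm{id}\otimes S)\Delta(h)$. $(H\otimes H)\otimes_HV$ is the quotient of $H\otimes H\otimes V$ by $(fh_{(1)}\otimes gh_{(2)})\otimes e=(f\otimes g)\otimes he$. A Poisson $H$-pseudoalgebra is a vector superspace $V$ (parity $p$) with a left $H$-module structure, an even supercommutative associative product with $h(ab)=(h_{(1)}a)(h_{(2)}b)$, and an even pseudobracket $[a*b]\in(H\otimes H)\otimes_HV$ making $V$ a Lie $H$-pseudoalgebra ($H$-bilinearity $[fa*gb]=((f\otimes g)\otimes_H1)[a*b]$, skewsymmetry and Jacobi identity) and satisfying $[a*bc]=[a*b]c+(-1)^{p(b)p(c)}[a*c]b$. For $a,c\in V$ and $B=(f\otimes g)\otimes_Hb$, the products are $aB:=(f_{(1)}\otimes g)\otimes_H(f_{(-2)}a)b$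 and $Bc:=(f\otimes g_{(1)})\otimes_Hb(g_{(-2)}c)$, extended linearly; they are well defined and satisfy $(aB)c=a(Bc)$, which gives meaning to the triple products in the claim (empty products of elements of $V$ being omitted). *)

theory Defs
  imports Main "HOL-Library.Function_Algebras"
begin

text \<open>Elements of a tensor product are represented by finite lists of simple tensors
(scalars being absorbed into the factors); the list is mapped into the free vector space
over the product set (finitely supported functions into the field), and two lists
represent the same tensor iff their difference lies in the span of the defining
relations (multilinearity in each slot, and for the tensor products over H the
balancing relation).\<close>

definition fsingle :: "'a \<Rightarrow> 'k::zero \<Rightarrow> 'a \<Rightarrow> 'k" where
  "fsingle x c = (\<lambda>y. if y = x then c else 0)"

definition flist :: "'a list \<Rightarrow> 'a \<Rightarrow> 'k::comm_ring_1" where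
  "flist xs = (\<Sum>x\<leftarrow>xs. fsingle x 1)"

inductive_set lspan :: "('a \<Rightarrow> 'k::field) set \<Rightarrow> ('a \<Rightarrow> 'k) set"
  for G :: "('a \<Rightarrow> 'k) set" where
  lspan_zero: "0 \<in> lspan G"
| lspan_gen: "g \<in> G \<Longrightarrow> g \<in> lspan G"
| lspan_add: "x \<in> lspan G \<Longrightarrow> y \<in> lspan G \<Longrightarrow> x + y \<in> lspan G"
| lspan_smult: "x \<in> lspan G \<Longrightarrow> (\<lambda>z. c * x z) \<in> lspan G"

text \<open>Linearity relations in one slot; \<open>e\<close> embeds the slot into the product set.\<close>
definition rel_slot :: "('a \<Rightarrow> 'a \<Rightarrow> 'a) \<Rightarrow> ('k \<Rightarrow> 'a \<Rightarrow> 'a) \<Rightarrow> ('a \<Rightarrow> 'b)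
    \<Rightarrow> ('b \<Rightarrow> 'k::field) set" where
  "rel_slot ad sm e =
     {fsingle (e (ad x y)) 1 - fsingle (e x) 1 - fsingle (e y) 1 | x y. True} \<union>
     {fsingle (e (sm c x)) 1 - fsingle (e x) c | c x. True}"

definition rel_HH :: "('k::field \<Rightarrow> 'h::ring_1 \<Rightarrow> 'h) \<Rightarrow> ('h \<times> 'h \<Rightarrow> 'k) set" where
  "rel_HH sH = (\<Union>y. rel_slot (+) sH (\<lambda>x. (x, y))) \<union> (\<Union>x. rel_slot (+) sH (\<lambda>y. (x, y)))"

definition eq_HH :: "('k::field \<Rightarrow> 'h::ring_1 \<Rightarrow> 'h) \<Rightarrow> ('h \<times> 'h) list \<Rightarrow> ('h \<times> 'h) list \<Rightarrow> bool" where
  "eq_HH sH X Y \<longleftrightarrow> (flist X - flist Y :: 'h \<times> 'h \<Rightarrow> 'k) \<in> lspan (rel_HH sH)"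

definition rel_HHH :: "('k::field \<Rightarrow> 'h::ring_1 \<Rightarrow> 'h) \<Rightarrow> ('h \<times> 'h \<times> 'h \<Rightarrow> 'k) set" where
  "rel_HHH sH = (\<Union>y z. rel_slot (+) sH (\<lambda>x. (x, y, z))) \<union> (\<Union>x z. rel_slot (+) sH (\<lambda>y. (x, y, z)))
      \<union> (\<Union>x y. rel_slot (+) sH (\<lambda>z. (x, y, z)))"

definition eq_HHH :: "('k::field \<Rightarrow> 'h::ring_1 \<Rightarrow> 'h) \<Rightarrow> ('h \<times> 'h \<times> 'h) list \<Rightarrow> ('h \<times> 'h \<times> 'h) list \<Rightarrow> bool" where
  "eq_HHH sH X Y \<longleftrightarrow> (flist X - flist Y :: 'h \<times> 'h \<times> 'h \<Rightarrow> 'k) \<in> lspan (rel_HHH sH)"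

text \<open>\<open>sH\<close>: scalar multiplication of the field on H; ring structure of H from the class
\<open>ring_1\<close>; \<open>cop h\<close>: a (Sweedler) representative of \<open>\<Delta>(h) \<in> H \<otimes> H\<close>; \<open>eps\<close>: counit;
\<open>S\<close>: antipode.\<close>
definition cocomm_hopf :: "('k::field_char_0 \<Rightarrow> 'h::ring_1 \<Rightarrow> 'h) \<Rightarrow> ('h \<Rightarrow> ('h \<times> 'h) list)
    \<Rightarrow> ('h \<Rightarrow> 'k) \<Rightarrow> ('h \<Rightarrow> 'h) \<Rightarrow> bool" where
  "cocomm_hopf sH cop eps S \<longleftrightarrow>
    (\<forall>c x y. sH c (x + y) = sH c x + sH c y) \<and>
    (\<forall>c d x. sH (c + d) x = sH c x + sH d x) \<and>
    (\<forall>c d x. sH (c * d) x = sH c (sH d x)) \<and>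
    (\<forall>x. sH 1 x = x) \<and>
    (\<forall>c x y. sH c (x * y) = sH c x * y \<and> sH c (x * y) = x * sH c y) \<and>
    (\<forall>x y. eq_HH sH (cop (x + y)) (cop x @ cop y)) \<and>
    (\<forall>c x. eq_HH sH (cop (sH c x)) (map (\<lambda>(u, v). (sH c u, v)) (cop x))) \<and>
    (\<forall>h. eq_HHH sH (concat (map (\<lambda>(x, y). map (\<lambda>(x1, x2). (x1, x2, y)) (cop x)) (cop h)))
                   (concat (map (\<lambda>(x, y). map (\<lambda>(y1, y2). (x, y1, y2)) (cop y)) (cop h)))) \<and>
    (\<forall>x y. eps (x + y) = eps x + eps y) \<and>
    (\<forall>c x. eps (sH c x) = c * eps x) \<and>
    (\<forall>h. (\<Sum>(x, y)\<leftarrow>cop h. sH (eps x) y) = h) \<and>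
    (\<forall>h. (\<Sum>(x, y)\<leftarrow>cop h. sH (eps y) x) = h) \<and>
    (\<forall>g h. eq_HH sH (cop (g * h))
        (concat (map (\<lambda>(x, y). map (\<lambda>(x', y'). (x * x', y * y')) (cop h)) (cop g)))) \<and>
    eq_HH sH (cop 1) [(1, 1)] \<and>
    (\<forall>g h. eps (g * h) = eps g * eps h) \<and> eps 1 = 1 \<and>
    (\<forall>x y. S (x + y) = S x + S y) \<and>
    (\<forall>c x. S (sH c x) = sH c (S x)) \<and>
    (\<forall>h. (\<Sum>(x, y)\<leftarrow>cop h. S x * y) = sH (eps h) 1) \<and>
    (\<forall>h. (\<Sum>(x, y)\<leftarrow>cop h. x * S y) = sH (eps h) 1) \<and>
    (\<forall>h. eq_HH sH (cop h) (map prod.swap (cop h)))"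

definition rel_T :: "('k::field \<Rightarrow> 'h::ring_1 \<Rightarrow> 'h) \<Rightarrow> ('h \<Rightarrow> ('h \<times> 'h) list)
    \<Rightarrow> ('k \<Rightarrow> 'v::ab_group_add \<Rightarrow> 'v) \<Rightarrow> ('h \<Rightarrow> 'v \<Rightarrow> 'v) \<Rightarrow> ('h \<times> 'h \<times> 'v \<Rightarrow> 'k) set" where
  "rel_T sH cop sV act =
     (\<Union>y v. rel_slot (+) sH (\<lambda>x. (x, y, v))) \<union> (\<Union>x v. rel_slot (+) sH (\<lambda>y. (x, y, v)))
     \<union> (\<Union>x y. rel_slot (+) sV (\<lambda>v. (x, y, v)))
     \<union> {flist (map (\<lambda>(x, y). (f * x, g * y, v)) (cop h)) - fsingle (f, g, act h v) 1 | f g h v. True}"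

definition eq_T :: "('k::field \<Rightarrow> 'h::ring_1 \<Rightarrow> 'h) \<Rightarrow> ('h \<Rightarrow> ('h \<times> 'h) list)
    \<Rightarrow> ('k \<Rightarrow> 'v::ab_group_add \<Rightarrow> 'v) \<Rightarrow> ('h \<Rightarrow> 'v \<Rightarrow> 'v)
    \<Rightarrow> ('h \<times> 'h \<times> 'v) list \<Rightarrow> ('h \<times> 'h \<times> 'v) list \<Rightarrow> bool" where
  "eq_T sH cop sV act X Y \<longleftrightarrow> (flist X - flist Y :: 'h \<times> 'h \<times> 'v \<Rightarrow> 'k) \<in> lspan (rel_T sH cop sV act)"

definition rel_T4 :: "('k::field \<Rightarrow> 'h::ring_1 \<Rightarrow> 'h) \<Rightarrow> ('h \<Rightarrow> ('h \<times> 'h) list)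
    \<Rightarrow> ('k \<Rightarrow> 'v::ab_group_add \<Rightarrow> 'v) \<Rightarrow> ('h \<Rightarrow> 'v \<Rightarrow> 'v) \<Rightarrow> ('h \<times> 'h \<times> 'h \<times> 'v \<Rightarrow> 'k) set" where
  "rel_T4 sH cop sV act =
     (\<Union>y z v. rel_slot (+) sH (\<lambda>x. (x, y, z, v))) \<union> (\<Union>x z v. rel_slot (+) sH (\<lambda>y. (x, y, z, v)))
     \<union> (\<Union>x y v. rel_slot (+) sH (\<lambda>z. (x, y, z, v))) \<union> (\<Union>x y z. rel_slot (+) sV (\<lambda>v. (x, y, z, v)))
     \<union> {flist (concat (map (\<lambda>(x, y). map (\<lambda>(y1, y2). (f * x, g * y1, k * y2, v)) (cop y)) (cop h)))
          - fsingle (f, g, k, act h v) 1 | f g k h v. True}"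

definition eq_T4 :: "('k::field \<Rightarrow> 'h::ring_1 \<Rightarrow> 'h) \<Rightarrow> ('h \<Rightarrow> ('h \<times> 'h) list)
    \<Rightarrow> ('k \<Rightarrow> 'v::ab_group_add \<Rightarrow> 'v) \<Rightarrow> ('h \<Rightarrow> 'v \<Rightarrow> 'v)
    \<Rightarrow> ('h \<times> 'h \<times> 'h \<times> 'v) list \<Rightarrow> ('h \<times> 'h \<times> 'h \<times> 'v) list \<Rightarrow> bool" where
  "eq_T4 sH cop sV act X Y \<longleftrightarrow>
     (flist X - flist Y :: 'h \<times> 'h \<times> 'h \<times> 'v \<Rightarrow> 'k) \<in> lspan (rel_T4 sH cop sV act)"

definition tmap2 :: "'h::times \<Rightarrow> 'h \<Rightarrow> ('h \<times> 'h \<times> 'v) list \<Rightarrow> ('h \<times> 'h \<times> 'v) list" where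
  "tmap2 f g X = map (\<lambda>(x, y, v). (f * x, g * y, v)) X"

definition tscal :: "('k \<Rightarrow> 'v \<Rightarrow> 'v) \<Rightarrow> 'k \<Rightarrow> ('h \<times> 'h \<times> 'v) list \<Rightarrow> ('h \<times> 'h \<times> 'v) list" where
  "tscal sV c X = map (\<lambda>(x, y, v). (x, y, sV c v)) X"

definition tswap :: "('h \<times> 'h \<times> 'v) list \<Rightarrow> ('h \<times> 'h \<times> 'v) list" where
  "tswap X = map (\<lambda>(x, y, v). (y, x, v)) X"

definition tscal4 :: "('k \<Rightarrow> 'v \<Rightarrow> 'v) \<Rightarrow> 'k \<Rightarrow> ('h \<times> 'h \<times> 'h \<times> 'v) list \<Rightarrow> ('h \<times> 'h \<times> 'h \<times> 'v) list" where
  "tscal4 sV c X = map (\<lambda>(x, y, z, v). (x, y, z, sV c v)) X"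

definition tswap12 :: "('h \<times> 'h \<times> 'h \<times> 'v) list \<Rightarrow> ('h \<times> 'h \<times> 'h \<times> 'v) list" where
  "tswap12 X = map (\<lambda>(x, y, z, v). (y, x, z, v)) X"

text \<open>\<open>a B\<close> with \<open>a ((f \<otimes> g) \<otimes>_H b) = (f_(1) \<otimes> g) \<otimes>_H (f_(-2) a) b\<close>.\<close>
definition lmulT :: "('h \<Rightarrow> ('h \<times> 'h) list) \<Rightarrow> ('h \<Rightarrow> 'h) \<Rightarrow> ('h \<Rightarrow> 'v \<Rightarrow> 'v) \<Rightarrow> ('v \<Rightarrow> 'v \<Rightarrow> 'v)
    \<Rightarrow> 'v \<Rightarrow> ('h \<times> 'h \<times> 'v) list \<Rightarrow> ('h \<times> 'h \<times> 'v) list" where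
  "lmulT cop S act mul a X =
     concat (map (\<lambda>(f, g, b). map (\<lambda>(f1, f2). (f1, g, mul (act (S f2) a) b)) (cop f)) X)"

text \<open>\<open>B c\<close> with \<open>((f \<otimes> g) \<otimes>_H b) c = (f \<otimes> g_(1)) \<otimes>_H b (g_(-2) c)\<close>.\<close>
definition rmulT :: "('h \<Rightarrow> ('h \<times> 'h) list) \<Rightarrow> ('h \<Rightarrow> 'h) \<Rightarrow> ('h \<Rightarrow> 'v \<Rightarrow> 'v) \<Rightarrow> ('v \<Rightarrow> 'v \<Rightarrow> 'v)
    \<Rightarrow> ('h \<times> 'h \<times> 'v) list \<Rightarrow> 'v \<Rightarrow> ('h \<times> 'h \<times> 'v) list" where
  "rmulT cop S act mul X c =
     concat (map (\<lambda>(f, g, b). map (\<lambda>(g1, g2). (f, g1, mul b (act (S g2) c))) (cop g)) X)"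

text \<open>Products of finitely many elements; \<open>None\<close> is the empty product, which is omitted.\<close>
fun vprodO :: "('v \<Rightarrow> 'v \<Rightarrow> 'v) \<Rightarrow> 'v list \<Rightarrow> 'v option" where
  "vprodO mul [] = None"
| "vprodO mul (x # xs) = Some (foldl mul x xs)"

definition vprod :: "('v \<Rightarrow> 'v \<Rightarrow> 'v) \<Rightarrow> 'v list \<Rightarrow> 'v" where
  "vprod mul xs = foldl mul (hd xs) (tl xs)"

definition lmulO :: "('h \<Rightarrow> ('h \<times> 'h) list) \<Rightarrow> ('h \<Rightarrow> 'h) \<Rightarrow> ('h \<Rightarrow> 'v \<Rightarrow> 'v) \<Rightarrow> ('v \<Rightarrow> 'v \<Rightarrow> 'v)
    \<Rightarrow> 'v option \<Rightarrow> ('h \<times> 'h \<times> 'v) list \<Rightarrow> ('h \<times> 'h \<times> 'v) list" where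
  "lmulO cop S act mul a X = (case a of None \<Rightarrow> X | Some a' \<Rightarrow> lmulT cop S act mul a' X)"

definition rmulO :: "('h \<Rightarrow> ('h \<times> 'h) list) \<Rightarrow> ('h \<Rightarrow> 'h) \<Rightarrow> ('h \<Rightarrow> 'v \<Rightarrow> 'v) \<Rightarrow> ('v \<Rightarrow> 'v \<Rightarrow> 'v)
    \<Rightarrow> ('h \<times> 'h \<times> 'v) list \<Rightarrow> 'v option \<Rightarrow> ('h \<times> 'h \<times> 'v) list" where
  "rmulO cop S act mul X c = (case c of None \<Rightarrow> X | Some c' \<Rightarrow> rmulT cop S act mul X c')"

text \<open>\<open>[a * X]\<close> for \<open>X = \<Sum> (f \<otimes> g) \<otimes>_H e\<close>:
  \<open>\<Sum> ((1 \<otimes> f \<otimes> g) \<otimes>_H 1) ((id \<otimes> \<Delta>) \<otimes>_H id) [a * e]\<close>.\<close>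
definition brL :: "('h::times \<Rightarrow> ('h \<times> 'h) list) \<Rightarrow> ('v \<Rightarrow> 'v \<Rightarrow> ('h \<times> 'h \<times> 'v) list)
    \<Rightarrow> 'v \<Rightarrow> ('h \<times> 'h \<times> 'v) list \<Rightarrow> ('h \<times> 'h \<times> 'h \<times> 'v) list" where
  "brL cop br a X = concat (map (\<lambda>(f, g, e).
     concat (map (\<lambda>(h, k, d). map (\<lambda>(k1, k2). (h, f * k1, g * k2, d)) (cop k)) (br a e))) X)"

text \<open>\<open>[X * c]\<close> for \<open>X = \<Sum> (f \<otimes> g) \<otimes>_H e\<close>:
  \<open>\<Sum> ((f \<otimes> g \<otimes> 1) \<otimes>_H 1) ((\<Delta> \<otimes> id) \<otimes>_H id) [e * c]\<close>.\<close>
definition brR :: "('h::times \<Rightarrow> ('h \<times> 'h) list) \<Rightarrow> ('v \<Rightarrow> 'v \<Rightarrow> ('h \<times> 'h \<times> 'v) list)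
    \<Rightarrow> ('h \<times> 'h \<times> 'v) list \<Rightarrow> 'v \<Rightarrow> ('h \<times> 'h \<times> 'h \<times> 'v) list" where
  "brR cop br X c = concat (map (\<lambda>(f, g, e).
     concat (map (\<lambda>(h, k, d). map (\<lambda>(h1, h2). (f * h1, g * h2, k, d)) (cop h)) (br e c))) X)"

text \<open>Super vector space \<open>V = V0 \<oplus> V1\<close>; \<open>Vp V0 V1 p\<close> is the homogeneous component of
parity \<open>p mod 2\<close>.\<close>
definition Vp :: "'v set \<Rightarrow> 'v set \<Rightarrow> nat \<Rightarrow> 'v set" where
  "Vp V0 V1 p = (if even p then V0 else V1)"

definition poisson_pseudoalg :: "('k::field_char_0 \<Rightarrow> 'h::ring_1 \<Rightarrow> 'h) \<Rightarrow> ('h \<Rightarrow> ('h \<times> 'h) list)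
    \<Rightarrow> ('h \<Rightarrow> 'k) \<Rightarrow> ('h \<Rightarrow> 'h) \<Rightarrow> ('k \<Rightarrow> 'v::ab_group_add \<Rightarrow> 'v) \<Rightarrow> ('h \<Rightarrow> 'v \<Rightarrow> 'v)
    \<Rightarrow> 'v set \<Rightarrow> 'v set \<Rightarrow> ('v \<Rightarrow> 'v \<Rightarrow> 'v) \<Rightarrow> ('v \<Rightarrow> 'v \<Rightarrow> ('h \<times> 'h \<times> 'v) list) \<Rightarrow> bool" where
  "poisson_pseudoalg sH cop eps S sV act V0 V1 mul br \<longleftrightarrow>
    \<comment> \<open>vector space\<close>
    (\<forall>c v w. sV c (v + w) = sV c v + sV c w) \<and>
    (\<forall>c d v. sV (c + d) v = sV c v + sV d v) \<and>
    (\<forall>c d v. sV (c * d) v = sV c (sV d v)) \<and>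
    (\<forall>v. sV 1 v = v) \<and>
    \<comment> \<open>super structure\<close>
    0 \<in> V0 \<and> (\<forall>v\<in>V0. \<forall>w\<in>V0. v + w \<in> V0) \<and> (\<forall>c. \<forall>v\<in>V0. sV c v \<in> V0) \<and>
    0 \<in> V1 \<and> (\<forall>v\<in>V1. \<forall>w\<in>V1. v + w \<in> V1) \<and> (\<forall>c. \<forall>v\<in>V1. sV c v \<in> V1) \<and>
    V0 \<inter> V1 = {0} \<and> (\<forall>v. \<exists>v0\<in>V0. \<exists>v1\<in>V1. v = v0 + v1) \<and>
    \<comment> \<open>left H-module (H purely even, so the action is even)\<close>
    (\<forall>x y v. act (x + y) v = act x v + act y v) \<and>
    (\<forall>c x v. act (sH c x) v = sV c (act x v)) \<and>
    (\<forall>h v w. act h (v + w) = act h v + act h w) \<and>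
    (\<forall>h c v. act h (sV c v) = sV c (act h v)) \<and>
    (\<forall>x y v. act (x * y) v = act x (act y v)) \<and>
    (\<forall>v. act 1 v = v) \<and>
    (\<forall>h. \<forall>v\<in>V0. act h v \<in> V0) \<and> (\<forall>h. \<forall>v\<in>V1. act h v \<in> V1) \<and>
    \<comment> \<open>even supercommutative associative product, compatible with the H-action\<close>
    (\<forall>a a' b. mul (a + a') b = mul a b + mul a' b) \<and>
    (\<forall>a b b'. mul a (b + b') = mul a b + mul a b') \<and>
    (\<forall>c a b. mul (sV c a) b = sV c (mul a b) \<and> mul a (sV c b) = sV c (mul a b)) \<and>
    (\<forall>a b c. mul (mul a b) c = mul a (mul b c)) \<and>
    (\<forall>i j a b. a \<in> Vp V0 V1 i \<longrightarrow> b \<in> Vp V0 V1 j \<longrightarrow>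
        mul a b \<in> Vp V0 V1 (i + j) \<and> mul a b = sV ((-1) ^ (i * j)) (mul b a)) \<and>
    (\<forall>h a b. act h (mul a b) = (\<Sum>(x, y)\<leftarrow>cop h. mul (act x a) (act y b))) \<and>
    \<comment> \<open>even pseudobracket: Lie pseudoalgebra\<close>
    (\<forall>a a' b. eq_T sH cop sV act (br (a + a') b) (br a b @ br a' b)) \<and>
    (\<forall>a b b'. eq_T sH cop sV act (br a (b + b')) (br a b @ br a b')) \<and>
    (\<forall>f g a b. eq_T sH cop sV act (br (act f a) (act g b)) (tmap2 f g (br a b))) \<and>
    (\<forall>i j a b. a \<in> Vp V0 V1 i \<longrightarrow> b \<in> Vp V0 V1 j \<longrightarrow>
        (\<exists>X. eq_T sH cop sV act (br a b) X \<and> (\<forall>(f, g, v)\<in>set X. v \<in> Vp V0 V1 (i + j)))) \<and>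
    (\<forall>i j a b. a \<in> Vp V0 V1 i \<longrightarrow> b \<in> Vp V0 V1 j \<longrightarrow>
        eq_T sH cop sV act (br b a) (tscal sV (- ((-1) ^ (i * j))) (tswap (br a b)))) \<and>
    (\<forall>i j a b c. a \<in> Vp V0 V1 i \<longrightarrow> b \<in> Vp V0 V1 j \<longrightarrow>
        eq_T4 sH cop sV act (brL cop br a (br b c))
          (tscal4 sV ((-1) ^ (i * j)) (tswap12 (brL cop br b (br a c))) @ brR cop br (br a b) c)) \<and>
    \<comment> \<open>Leibniz rule\<close>
    (\<forall>i j a b c. b \<in> Vp V0 V1 i \<longrightarrow> c \<in> Vp V0 V1 j \<longrightarrow>
        eq_T sH cop sV act (br a (mul b c))
          (rmulT cop S act mul (br a b) c @ tscal sV ((-1) ^ (i * j)) (rmulT cop S act mul (br a c) b)))"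

end

theory Submission
  imports Defs
begin


lemma flist_Nil[simp]: "flist [] = 0" by (simp add: flist_def)
lemma flist_Cons: "flist (x # xs) = fsingle x 1 + flist xs" by (simp add: flist_def)
lemma flist_append[simp]: "flist (xs @ ys) = flist xs + flist ys" by (simp add: flist_def)

definition supp :: "('a \<Rightarrow> 'k::zero) \<Rightarrow> 'a set" where "supp \<phi> = {t. \<phi> t \<noteq> 0}"

lemma finite_supp_fsingle[simp]: "finite (supp (fsingle x c))"
  by (rule finite_subset[of _ "{x}"]) (auto simp: supp_def fsingle_def)
lemma finite_supp_add[simp]: "finite (supp \<phi>) \<Longrightarrow> finite (supp \<psi>) \<Longrightarrow> finite (supp (\<phi> + \<psi> :: 'a \<Rightarrow> 'k::monoid_add))"
  by (rule finite_subset[of _ "supp \<phi> \<union> supp \<psi>"]) (auto simp: supp_def)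
lemma finite_supp_smult[simp]: "finite (supp \<psi>) \<Longrightarrow> finite (supp (\<lambda>z. c * \<psi> z :: 'k::semiring_0))"
  by (rule finite_subset[of _ "supp \<psi>"]) (auto simp: supp_def)
lemma finite_supp_zero[simp]: "finite (supp 0)" by (simp add: supp_def)
lemma finite_supp_flist[simp]: "finite (supp (flist xs :: 'a \<Rightarrow> 'k::comm_ring_1))"
proof (induct xs)
  case Nil show ?case by (simp add: supp_def)
next
  case (Cons a xs) show ?case unfolding flist_Cons by (rule finite_supp_add[OF finite_supp_fsingle Cons])
qed
lemma finite_supp_diff[simp]: "finite (supp \<phi>) \<Longrightarrow> finite (supp \<psi>) \<Longrightarrow> finite (supp (\<phi> - \<psi> :: 'a \<Rightarrow> 'k::group_add))"
  by (rule finite_subset[of _ "supp \<phi> \<union> supp \<psi>"]) (auto simp: supp_def)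

lemma lspan_neg: "x \<in> lspan G \<Longrightarrow> - x \<in> lspan G"
proof -
  assume "x \<in> lspan G"
  hence "(\<lambda>z. (-1) * x z) \<in> lspan G" by (rule lspan_smult)
  moreover have "(\<lambda>z. (-1) * x z) = - x" by auto
  ultimately show ?thesis by simp
qed
lemma lspan_diff: "x \<in> lspan G \<Longrightarrow> y \<in> lspan G \<Longrightarrow> x - y \<in> lspan G"
proof -
  assume a: "x \<in> lspan G" "y \<in> lspan G"
  have "x + - y \<in> lspan G" by (rule lspan_add[OF a(1) lspan_neg[OF a(2)]])
  thus ?thesis by (simp only: diff_conv_add_uminus)
qed
lemma lspan_sum_list: "(\<And>x. x \<in> set xs \<Longrightarrow> f x \<in> lspan G) \<Longrightarrow> sum_list (map f xs) \<in> lspan G"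
proof (induct xs)
  case Nil show ?case by (simp only: list.map sum_list.Nil) (rule lspan.lspan_zero)
next
  case (Cons a xs) thus ?case by (simp only: list.map sum_list.Cons) (rule lspan_add, auto)
qed
lemma lspan_mono: "x \<in> lspan G \<Longrightarrow> G \<subseteq> G' \<Longrightarrow> x \<in> lspan G'"
proof (induct rule: lspan.induct)
  case lspan_zero show ?case by (rule lspan.lspan_zero)
next
  case (lspan_gen g) thus ?case by (blast intro: lspan.lspan_gen)
next
  case (lspan_add x y) thus ?case by (blast intro: lspan.lspan_add)
next
  case (lspan_smult x c) thus ?case by (blast intro: lspan.lspan_smult)
qed

locale kmod =
  fixes sm :: "'k::field \<Rightarrow> 'm::ab_group_add \<Rightarrow> 'm"
  assumes sm_add: "sm c (x + y) = sm c x + sm c y"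
  and sm_addl: "sm (c + d) x = sm c x + sm d x"
  and sm_mult: "sm (c * d) x = sm c (sm d x)"
  and sm_one: "sm 1 x = x"
begin

lemma sm_zero[simp]: "sm 0 x = 0"
  using sm_addl[of 0 0 x] by simp
lemma sm_zero2[simp]: "sm c 0 = 0"
  using sm_add[of c 0 0] by simp
lemma sm_neg: "sm (-c) x = - sm c x"
proof -
  have "sm c x + sm (-c) x = 0" using sm_addl[of c "-c" x] by simp
  thus ?thesis by (metis neg_eq_iff_add_eq_0)
qed
lemma sm_neg2: "sm c (- x) = - sm c x"
proof -
  have "sm c x + sm c (-x) = 0" using sm_add[of c x "-x"] by simp
  thus ?thesis by (metis neg_eq_iff_add_eq_0)
qed
lemma sm_diff: "sm c (x - y) = sm c x - sm c y"
  unfolding diff_conv_add_uminus sm_add sm_neg2 ..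
lemma sm_sum: "sm c (sum f A) = (\<Sum>a\<in>A. sm c (f a))"
  by (induct A rule: infinite_finite_induct) (simp_all add: sm_add)
lemma sm_sum_list: "sm c (sum_list (map f xs)) = sum_list (map (\<lambda>x. sm c (f x)) xs)"
  by (induct xs) (simp_all add: sm_add)

definition lin :: "('a \<Rightarrow> 'm) \<Rightarrow> ('a \<Rightarrow> 'k) \<Rightarrow> 'm" where
  "lin \<Phi> \<psi> = (\<Sum>t\<in>supp \<psi>. sm (\<psi> t) (\<Phi> t))"

lemma lin_on: "finite A \<Longrightarrow> supp \<psi> \<subseteq> A \<Longrightarrow> lin \<Phi> \<psi> = (\<Sum>t\<in>A. sm (\<psi> t) (\<Phi> t))"
  unfolding lin_def by (rule sum.mono_neutral_left) (auto simp: supp_def)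

lemma lin_add: assumes "finite (supp \<phi>)" "finite (supp \<psi>)"
  shows "lin \<Phi> (\<phi> + \<psi>) = lin \<Phi> \<phi> + lin \<Phi> \<psi>"
proof -
  let ?A = "supp \<phi> \<union> supp \<psi>"
  have "lin \<Phi> (\<phi> + \<psi>) = (\<Sum>t\<in>?A. sm ((\<phi> + \<psi>) t) (\<Phi> t))"
    by (rule lin_on) (simp add: assms, auto simp: supp_def)
  also have "\<dots> = (\<Sum>t\<in>?A. sm (\<phi> t) (\<Phi> t)) + (\<Sum>t\<in>?A. sm (\<psi> t) (\<Phi> t))"
    by (simp add: sm_addl sum.distrib)
  also have "(\<Sum>t\<in>?A. sm (\<phi> t) (\<Phi> t)) = lin \<Phi> \<phi>"
    by (rule lin_on[symmetric]) (auto simp: assms)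
  also have "(\<Sum>t\<in>?A. sm (\<psi> t) (\<Phi> t)) = lin \<Phi> \<psi>"
    by (rule lin_on[symmetric]) (auto simp: assms)
  finally show ?thesis .
qed

lemma lin_smult: "lin \<Phi> (\<lambda>z. c * \<psi> z) = sm c (lin \<Phi> \<psi>)"
proof (cases "c = 0")
  case True thus ?thesis by (simp add: lin_def supp_def)
next
  case False
  hence "supp (\<lambda>z. c * \<psi> z) = supp \<psi>" by (auto simp: supp_def)
  thus ?thesis by (simp add: lin_def sm_sum sm_mult)
qed

lemma lin_zero[simp]: "lin \<Phi> 0 = 0"
proof -
  have "supp (0::'a \<Rightarrow> 'k) = {}" by (simp add: supp_def)
  thus ?thesis unfolding lin_def by (simp only: sum.empty)
qed

lemma lin_fsingle: "lin \<Phi> (fsingle x c) = sm c (\<Phi> x)"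
proof -
  have "lin \<Phi> (fsingle x c) = (\<Sum>t\<in>{x}. sm (fsingle x c t) (\<Phi> t))"
    by (rule lin_on) (auto simp: supp_def fsingle_def)
  thus ?thesis by (simp add: fsingle_def)
qed

lemma lin_flist: "lin \<Phi> (flist xs) = sum_list (map \<Phi> xs)"
proof (induct xs)
  case Nil show ?case by (simp only: flist_Nil lin_zero list.map sum_list.Nil)
next
  case (Cons a xs)
  have "lin \<Phi> (flist (a#xs)) = lin \<Phi> (fsingle a 1) + lin \<Phi> (flist xs)"
    unfolding flist_Cons by (rule lin_add) simp_all
  thus ?case by (simp add: lin_fsingle sm_one Cons)
qed

lemma lin_neg: "lin \<Phi> (- \<psi>) = - lin \<Phi> \<psi>"
proof -
  have e: "- \<psi> = (\<lambda>z. (-1) * \<psi> z)" by auto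
  show ?thesis unfolding e lin_smult by (simp only: sm_neg sm_one)
qed

lemma lin_diff: "finite (supp \<phi>) \<Longrightarrow> finite (supp \<psi>) \<Longrightarrow> lin \<Phi> (\<phi> - \<psi>) = lin \<Phi> \<phi> - lin \<Phi> \<psi>"
proof -
  assume a: "finite (supp \<phi>)" "finite (supp \<psi>)"
  have f: "finite (supp (- \<psi>))" using a by (simp add: supp_def)
  show ?thesis using lin_add[OF a(1) f] by (simp add: lin_neg)
qed

definition closedZ :: "'m set \<Rightarrow> bool" where
  "closedZ Z \<longleftrightarrow> 0 \<in> Z \<and> (\<forall>x\<in>Z. \<forall>y\<in>Z. x + y \<in> Z) \<and> (\<forall>c. \<forall>x\<in>Z. sm c x \<in> Z)"

lemma closedZ_diff: "closedZ Z \<Longrightarrow> x \<in> Z \<Longrightarrow> y \<in> Z \<Longrightarrow> x - y \<in> Z"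
proof -
  assume a: "closedZ Z" "x \<in> Z" "y \<in> Z"
  have "sm (-1) y \<in> Z" using a unfolding closedZ_def by blast
  hence "- y \<in> Z" by (simp only: sm_neg sm_one)
  hence "x + - y \<in> Z" using a unfolding closedZ_def by blast
  thus ?thesis by (simp only: diff_conv_add_uminus)
qed
lemma closedZ_add: "closedZ Z \<Longrightarrow> x \<in> Z \<Longrightarrow> y \<in> Z \<Longrightarrow> x + y \<in> Z"
  unfolding closedZ_def by blast
lemma closedZ_zero: "closedZ Z \<Longrightarrow> 0 \<in> Z"
  unfolding closedZ_def by blast
lemma closedZ_sm: "closedZ Z \<Longrightarrow> x \<in> Z \<Longrightarrow> sm c x \<in> Z"
  unfolding closedZ_def by blast
lemma closedZ_0: "closedZ {0}" by (simp add: closedZ_def)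

lemma lspan_lin:
  assumes Z: "closedZ Z" and G: "\<forall>g\<in>G. finite (supp g) \<and> lin \<Phi> g \<in> Z" and x: "\<phi> \<in> lspan G"
  shows "finite (supp \<phi>) \<and> lin \<Phi> \<phi> \<in> Z"
  using x
proof induct
  case lspan_zero
  have "finite (supp (0::'a \<Rightarrow> 'k)) \<and> lin \<Phi> 0 \<in> Z" using Z by (simp add: closedZ_def)
  thus ?case by (simp add: zero_fun_def)
next
  case (lspan_gen g) thus ?case using G by blast
next
  case (lspan_add x y)
  have "finite (supp (x + y)) \<and> lin \<Phi> (x + y) \<in> Z" using lspan_add Z by (simp add: lin_add closedZ_def)
  thus ?case by (simp add: plus_fun_def)
next
  case (lspan_smult x c) thus ?case using Z by (simp add: lin_smult closedZ_def)
qed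

lemma transfer:
  assumes Z: "closedZ Z" and G: "\<forall>g\<in>G. finite (supp g) \<and> lin \<Phi> g \<in> Z"
    and x: "flist X - flist Y \<in> lspan G"
  shows "sum_list (map \<Phi> X) - sum_list (map \<Phi> Y) \<in> Z"
  using lspan_lin[OF Z G x] by (simp add: lin_diff lin_flist)

lemma rel_slot_gen:
  assumes Z: "closedZ Z"
    and A: "\<And>x y. \<Phi> (e (ad x y)) - \<Phi> (e x) - \<Phi> (e y) \<in> Z"
    and M: "\<And>c x. \<Phi> (e (smA c x)) - sm c (\<Phi> (e x)) \<in> Z"
  shows "\<forall>g\<in>rel_slot ad smA e. finite (supp g) \<and> lin \<Phi> g \<in> Z"
proof
  fix g assume "g \<in> rel_slot ad smA e"
  then consider (a) x y where "g = fsingle (e (ad x y)) 1 - fsingle (e x) 1 - fsingle (e y) 1"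
    | (m) c x where "g = fsingle (e (smA c x)) 1 - fsingle (e x) c"
    unfolding rel_slot_def by blast
  thus "finite (supp g) \<and> lin \<Phi> g \<in> Z"
  proof cases
    case a
    have "lin \<Phi> g = \<Phi> (e (ad x y)) - \<Phi> (e x) - \<Phi> (e y)"
      unfolding a by (simp add: lin_diff lin_fsingle sm_one)
    thus ?thesis using A a by simp
  next
    case m
    have "lin \<Phi> g = \<Phi> (e (smA c x)) - sm c (\<Phi> (e x))"
      unfolding m by (simp add: lin_diff lin_fsingle sm_one)
    thus ?thesis using M m by simp
  qed
qed

end

interpretation fmod: kmod "\<lambda>(c::'k::field) (\<phi>::'b \<Rightarrow> 'k). (\<lambda>z. c * \<phi> z)"
  by unfold_locales (auto simp: algebra_simps)

lemma closedZ_lspan: "fmod.closedZ (lspan G)"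
  unfolding fmod.closedZ_def by (auto intro: lspan.intros)

lemma sum_list_flist: "sum_list (map (\<lambda>x. flist (F x)) X) = flist (concat (map F X))"
  by (induct X) (simp_all only: list.map sum_list.Nil sum_list.Cons concat.simps flist_Nil flist_append)


lemma sum_list_concat_map: "sum_list (map f (concat xss)) = sum_list (map (\<lambda>xs. sum_list (map f xs)) xss)"
  by (induct xss) simp_all

lemma sum_list_swap: "(\<Sum>x\<leftarrow>A. \<Sum>y\<leftarrow>B. f x y) = (\<Sum>y\<leftarrow>B. \<Sum>x\<leftarrow>A. f x y :: 'a::comm_monoid_add)"
  by (induct A) (simp_all add: sum_list_addf)

lemma additive_zero: "(\<And>x y. g (x + y) = g x + g y) \<Longrightarrow> g (0::'a::monoid_add) = (0::'b::ab_group_add)"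
proof -
  assume "\<And>x y. g (x + y) = g x + g y"
  hence "g (0 + 0) = g 0 + g 0" .
  thus ?thesis by simp
qed

lemma additive_sum_list: "(\<And>x y. g (x + y) = g x + g y) \<Longrightarrow>
   g (sum_list (map f xs)) = sum_list (map (\<lambda>x. g (f x)) xs :: 'b::ab_group_add list)"
  by (induct xs) (simp_all add: additive_zero)

context kmod begin

lemma hh_gen:
  assumes Z: "closedZ Z"
    and A1: "\<And>x x' y. \<Phi> (x + x', y) - \<Phi> (x, y) - \<Phi> (x', y) \<in> Z"
    and M1: "\<And>c x y. \<Phi> (sHH c x, y) - sm c (\<Phi> (x, y)) \<in> Z"
    and A2: "\<And>x y y'. \<Phi> (x, y + y') - \<Phi> (x, y) - \<Phi> (x, y') \<in> Z"
    and M2: "\<And>c x y. \<Phi> (x, sHH c y) - sm c (\<Phi> (x, y)) \<in> Z"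
  shows "\<forall>g\<in>rel_HH sHH. finite (supp g) \<and> lin \<Phi> g \<in> Z"
proof -
  have 1: "\<forall>g\<in>rel_slot (+) sHH (\<lambda>x. (x, y)). finite (supp g) \<and> lin \<Phi> g \<in> Z" for y
    by (rule rel_slot_gen[OF Z]) (simp_all add: A1 M1)
  have 2: "\<forall>g\<in>rel_slot (+) sHH (\<lambda>y. (x, y)). finite (supp g) \<and> lin \<Phi> g \<in> Z" for x
    by (rule rel_slot_gen[OF Z]) (simp_all add: A2 M2)
  show ?thesis unfolding rel_HH_def using 1 2 by blast
qed

lemma hh_transfer:
  assumes E: "eq_HH sHH L L'" and Z: "closedZ Z"
    and A1: "\<And>x x' y. \<Phi> (x + x', y) - \<Phi> (x, y) - \<Phi> (x', y) \<in> Z"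
    and M1: "\<And>c x y. \<Phi> (sHH c x, y) - sm c (\<Phi> (x, y)) \<in> Z"
    and A2: "\<And>x y y'. \<Phi> (x, y + y') - \<Phi> (x, y) - \<Phi> (x, y') \<in> Z"
    and M2: "\<And>c x y. \<Phi> (x, sHH c y) - sm c (\<Phi> (x, y)) \<in> Z"
  shows "sum_list (map \<Phi> L) - sum_list (map \<Phi> L') \<in> Z"
  by (rule transfer[OF Z hh_gen[OF Z A1 M1 A2 M2]]) (use E in \<open>simp add: eq_HH_def\<close>)

lemma hh_eq:
  assumes E: "eq_HH sHH L L'"
    and A1: "\<And>x x' y. \<Phi> (x + x', y) = \<Phi> (x, y) + \<Phi> (x', y)"
    and M1: "\<And>c x y. \<Phi> (sHH c x, y) = sm c (\<Phi> (x, y))"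
    and A2: "\<And>x y y'. \<Phi> (x, y + y') = \<Phi> (x, y) + \<Phi> (x, y')"
    and M2: "\<And>c x y. \<Phi> (x, sHH c y) = sm c (\<Phi> (x, y))"
  shows "sum_list (map \<Phi> L) = sum_list (map \<Phi> L')"
  using hh_transfer[OF E closedZ_0, of \<Phi>] by (simp add: A1 M1 A2 M2)

lemma hhh_gen:
  assumes Z: "closedZ Z"
    and A1: "\<And>x x' y z. \<Phi> (x + x', y, z) - \<Phi> (x, y, z) - \<Phi> (x', y, z) \<in> Z"
    and M1: "\<And>c x y z. \<Phi> (sHH c x, y, z) - sm c (\<Phi> (x, y, z)) \<in> Z"
    and A2: "\<And>x y y' z. \<Phi> (x, y + y', z) - \<Phi> (x, y, z) - \<Phi> (x, y', z) \<in> Z"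
    and M2: "\<And>c x y z. \<Phi> (x, sHH c y, z) - sm c (\<Phi> (x, y, z)) \<in> Z"
    and A3: "\<And>x y z z'. \<Phi> (x, y, z + z') - \<Phi> (x, y, z) - \<Phi> (x, y, z') \<in> Z"
    and M3: "\<And>c x y z. \<Phi> (x, y, sHH c z) - sm c (\<Phi> (x, y, z)) \<in> Z"
  shows "\<forall>g\<in>rel_HHH sHH. finite (supp g) \<and> lin \<Phi> g \<in> Z"
proof -
  have 1: "\<forall>g\<in>rel_slot (+) sHH (\<lambda>x. (x, y, z)). finite (supp g) \<and> lin \<Phi> g \<in> Z" for y z
    by (rule rel_slot_gen[OF Z]) (simp_all add: A1 M1)
  have 2: "\<forall>g\<in>rel_slot (+) sHH (\<lambda>y. (x, y, z)). finite (supp g) \<and> lin \<Phi> g \<in> Z" for x z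
    by (rule rel_slot_gen[OF Z]) (simp_all add: A2 M2)
  have 3: "\<forall>g\<in>rel_slot (+) sHH (\<lambda>z. (x, y, z)). finite (supp g) \<and> lin \<Phi> g \<in> Z" for x y
    by (rule rel_slot_gen[OF Z]) (simp_all add: A3 M3)
  show ?thesis unfolding rel_HHH_def using 1 2 3 by blast
qed

lemma hhh_transfer:
  assumes E: "eq_HHH sHH L L'" and Z: "closedZ Z"
    and A1: "\<And>x x' y z. \<Phi> (x + x', y, z) - \<Phi> (x, y, z) - \<Phi> (x', y, z) \<in> Z"
    and M1: "\<And>c x y z. \<Phi> (sHH c x, y, z) - sm c (\<Phi> (x, y, z)) \<in> Z"
    and A2: "\<And>x y y' z. \<Phi> (x, y + y', z) - \<Phi> (x, y, z) - \<Phi> (x, y', z) \<in> Z"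
    and M2: "\<And>c x y z. \<Phi> (x, sHH c y, z) - sm c (\<Phi> (x, y, z)) \<in> Z"
    and A3: "\<And>x y z z'. \<Phi> (x, y, z + z') - \<Phi> (x, y, z) - \<Phi> (x, y, z') \<in> Z"
    and M3: "\<And>c x y z. \<Phi> (x, y, sHH c z) - sm c (\<Phi> (x, y, z)) \<in> Z"
  shows "sum_list (map \<Phi> L) - sum_list (map \<Phi> L') \<in> Z"
  by (rule transfer[OF Z hhh_gen[OF Z A1 M1 A2 M2 A3 M3]]) (use E in \<open>simp add: eq_HHH_def\<close>)

lemma hhh_eq:
  assumes E: "eq_HHH sHH L L'"
    and A1: "\<And>x x' y z. \<Phi> (x + x', y, z) = \<Phi> (x, y, z) + \<Phi> (x', y, z)"
    and M1: "\<And>c x y z. \<Phi> (sHH c x, y, z) = sm c (\<Phi> (x, y, z))"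
    and A2: "\<And>x y y' z. \<Phi> (x, y + y', z) = \<Phi> (x, y, z) + \<Phi> (x, y', z)"
    and M2: "\<And>c x y z. \<Phi> (x, sHH c y, z) = sm c (\<Phi> (x, y, z))"
    and A3: "\<And>x y z z'. \<Phi> (x, y, z + z') = \<Phi> (x, y, z) + \<Phi> (x, y, z')"
    and M3: "\<And>c x y z. \<Phi> (x, y, sHH c z) = sm c (\<Phi> (x, y, z))"
  shows "sum_list (map \<Phi> L) = sum_list (map \<Phi> L')"
  using hhh_transfer[OF E closedZ_0, of \<Phi>] by (simp add: A1 M1 A2 M2 A3 M3)

lemma t_gen:
  assumes Z: "closedZ Z"
    and A1: "\<And>x x' y v. \<Phi> (x + x', y, v) - \<Phi> (x, y, v) - \<Phi> (x', y, v) \<in> Z"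
    and M1: "\<And>c x y v. \<Phi> (sHH c x, y, v) - sm c (\<Phi> (x, y, v)) \<in> Z"
    and A2: "\<And>x y y' v. \<Phi> (x, y + y', v) - \<Phi> (x, y, v) - \<Phi> (x, y', v) \<in> Z"
    and M2: "\<And>c x y v. \<Phi> (x, sHH c y, v) - sm c (\<Phi> (x, y, v)) \<in> Z"
    and A3: "\<And>x y v w. \<Phi> (x, y, v + w) - \<Phi> (x, y, v) - \<Phi> (x, y, w) \<in> Z"
    and M3: "\<And>c x y v. \<Phi> (x, y, sVV c v) - sm c (\<Phi> (x, y, v)) \<in> Z"
    and B: "\<And>f g h v. sum_list (map (\<lambda>(x, y). \<Phi> (f * x, g * y, v)) (copp h)) - \<Phi> (f, g, actt h v) \<in> Z"
  shows "\<forall>g\<in>rel_T sHH copp sVV actt. finite (supp g) \<and> lin \<Phi> g \<in> Z"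
proof -
  have 1: "\<forall>g\<in>rel_slot (+) sHH (\<lambda>x. (x, y, v)). finite (supp g) \<and> lin \<Phi> g \<in> Z" for y v
    by (rule rel_slot_gen[OF Z]) (simp_all add: A1 M1)
  have 2: "\<forall>g\<in>rel_slot (+) sHH (\<lambda>y. (x, y, v)). finite (supp g) \<and> lin \<Phi> g \<in> Z" for x v
    by (rule rel_slot_gen[OF Z]) (simp_all add: A2 M2)
  have 3: "\<forall>g\<in>rel_slot (+) sVV (\<lambda>v. (x, y, v)). finite (supp g) \<and> lin \<Phi> g \<in> Z" for x y
    by (rule rel_slot_gen[OF Z]) (simp_all add: A3 M3)
  have 4: "finite (supp g) \<and> lin \<Phi> g \<in> Z"
    if "g = flist (map (\<lambda>(x, y). (f * x, g' * y, v)) (copp h)) - fsingle (f, g', actt h v) 1" for g f g' h v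
  proof -
    have "lin \<Phi> g = sum_list (map \<Phi> (map (\<lambda>(x, y). (f * x, g' * y, v)) (copp h))) - \<Phi> (f, g', actt h v)"
      unfolding that by (simp add: lin_diff lin_flist lin_fsingle sm_one)
    also have "\<dots> = sum_list (map (\<lambda>(x, y). \<Phi> (f * x, g' * y, v)) (copp h)) - \<Phi> (f, g', actt h v)"
      by (simp add: split_def comp_def)
    finally show ?thesis using B that by simp
  qed
  show ?thesis unfolding rel_T_def using 1 2 3 4 by blast
qed

end


lemma add_diff_add': "a + c - (b + d) = (a - b) + (c - (d::'x::ab_group_add))"
  by (simp add: algebra_simps)

lemma rel_slot_sm: "fsingle (e (sm c x)) 1 - fsingle (e x) c \<in> rel_slot ad sm e"
  unfolding rel_slot_def by (rule UnI2, rule CollectI, rule exI[of _ c], rule exI[of _ x], simp)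
lemma rel_slot_ad: "fsingle (e (ad x y)) 1 - fsingle (e x) 1 - fsingle (e y) 1 \<in> rel_slot ad sm e"
  unfolding rel_slot_def by (rule UnI1, rule CollectI, rule exI[of _ x], rule exI[of _ y], simp)

locale hctx =
  fixes sH :: "'k::field_char_0 \<Rightarrow> 'h::ring_1 \<Rightarrow> 'h" and cop :: "'h \<Rightarrow> ('h \<times> 'h) list"
    and eps :: "'h \<Rightarrow> 'k" and S :: "'h \<Rightarrow> 'h"
    and sV :: "'k \<Rightarrow> 'v::ab_group_add \<Rightarrow> 'v" and act :: "'h \<Rightarrow> 'v \<Rightarrow> 'v"
  assumes hopf: "cocomm_hopf sH cop eps S"
  and sV_add: "sV c (v + w) = sV c v + sV c w"
  and sV_addl: "sV (c + d) v = sV c v + sV d v"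
  and sV_mult: "sV (c * d) v = sV c (sV d v)"
  and sV_one: "sV 1 v = v"
  and act_addl: "act (x + y) v = act x v + act y v"
  and act_sH: "act (sH c x) v = sV c (act x v)"
  and act_add: "act h (v + w) = act h v + act h w"
  and act_sV: "act h (sV c v) = sV c (act h v)"
  and act_mult: "act (x * y) v = act x (act y v)"
  and act_one: "act 1 v = v"
begin

lemma sH_add: "sH c (x + y) = sH c x + sH c y" using hopf unfolding cocomm_hopf_def by (elim conjE) (simp only:)
lemma sH_addl: "sH (c + d) x = sH c x + sH d x" using hopf unfolding cocomm_hopf_def by (elim conjE) (simp only:)
lemma sH_mult: "sH (c * d) x = sH c (sH d x)" using hopf unfolding cocomm_hopf_def by (elim conjE) (simp only:)
lemma sH_one: "sH 1 x = x" using hopf unfolding cocomm_hopf_def by (elim conjE) (simp only:)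
lemma sH_mul1: "sH c (x * y) = sH c x * y" using hopf unfolding cocomm_hopf_def by (elim conjE) (simp only:)
lemma sH_mul2: "sH c (x * y) = x * sH c y" using hopf unfolding cocomm_hopf_def by (elim conjE) blast
lemma cop_add: "eq_HH sH (cop (x + y)) (cop x @ cop y)" using hopf unfolding cocomm_hopf_def by (elim conjE) (simp only:)
lemma cop_sH: "eq_HH sH (cop (sH c x)) (map (\<lambda>(u, v). (sH c u, v)) (cop x))"
  using hopf unfolding cocomm_hopf_def by (elim conjE) (simp only:)
lemma coassoc: "eq_HHH sH (concat (map (\<lambda>(x, y). map (\<lambda>(x1, x2). (x1, x2, y)) (cop x)) (cop h)))
                   (concat (map (\<lambda>(x, y). map (\<lambda>(y1, y2). (x, y1, y2)) (cop y)) (cop h)))"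
  using hopf unfolding cocomm_hopf_def by (elim conjE) (simp only:)
lemma eps_add: "eps (x + y) = eps x + eps y" using hopf unfolding cocomm_hopf_def by (elim conjE) (simp only:)
lemma eps_sH: "eps (sH c x) = c * eps x" using hopf unfolding cocomm_hopf_def by (elim conjE) (simp only:)
lemma counit1: "(\<Sum>(x, y)\<leftarrow>cop h. sH (eps x) y) = h" using hopf unfolding cocomm_hopf_def by (elim conjE) (simp only:)
lemma counit2: "(\<Sum>(x, y)\<leftarrow>cop h. sH (eps y) x) = h" using hopf unfolding cocomm_hopf_def by (elim conjE) (simp only:)
lemma cop_mult: "eq_HH sH (cop (g * h))
        (concat (map (\<lambda>(x, y). map (\<lambda>(x', y'). (x * x', y * y')) (cop h)) (cop g)))"
  using hopf unfolding cocomm_hopf_def by (elim conjE) (simp only:)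
lemma cop_one: "eq_HH sH (cop 1) [(1, 1)]" using hopf unfolding cocomm_hopf_def by (elim conjE) (simp only:)
lemma eps_mult: "eps (g * h) = eps g * eps h" using hopf unfolding cocomm_hopf_def by (elim conjE) (simp only:)
lemma eps_one: "eps 1 = 1" using hopf unfolding cocomm_hopf_def by (elim conjE) (simp only:)
lemma S_add: "S (x + y) = S x + S y" using hopf unfolding cocomm_hopf_def by (elim conjE) (simp only:)
lemma S_sH: "S (sH c x) = sH c (S x)" using hopf unfolding cocomm_hopf_def by (elim conjE) (simp only:)
lemma anti1: "(\<Sum>(x, y)\<leftarrow>cop h. S x * y) = sH (eps h) 1" using hopf unfolding cocomm_hopf_def by (elim conjE) (simp only:)
lemma anti2: "(\<Sum>(x, y)\<leftarrow>cop h. x * S y) = sH (eps h) 1" using hopf unfolding cocomm_hopf_def by (elim conjE) (simp only:)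
lemma cocomm: "eq_HH sH (cop h) (map prod.swap (cop h))" using hopf unfolding cocomm_hopf_def by (elim conjE) (simp only:)

sublocale Hm: kmod sH
  by unfold_locales (simp_all add: sH_add sH_addl sH_mult sH_one)
sublocale Vm: kmod sV
  by unfold_locales (simp_all add: sV_add sV_addl sV_mult sV_one)

lemma S_zero[simp]: "S 0 = 0" by (rule additive_zero[OF S_add])
lemma eps_zero[simp]: "eps 0 = 0" by (rule additive_zero[OF eps_add])
lemma act_zero1[simp]: "act 0 v = 0" by (rule additive_zero[of "\<lambda>x. act x v", OF act_addl])
lemma act_zero2[simp]: "act h 0 = 0" by (rule additive_zero[OF act_add])
lemma S_sum: "S (sum_list (map f xs)) = sum_list (map (\<lambda>x. S (f x)) xs)"
  by (rule additive_sum_list[OF S_add])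
lemma eps_sum: "eps (sum_list (map f xs)) = sum_list (map (\<lambda>x. eps (f x)) xs)"
  by (rule additive_sum_list[OF eps_add])
lemma act_sum1: "act (sum_list (map f xs)) v = sum_list (map (\<lambda>x. act (f x) v) xs)"
  by (rule additive_sum_list[of "\<lambda>x. act x v", OF act_addl])
lemma act_sum2: "act h (sum_list (map f xs)) = sum_list (map (\<lambda>x. act h (f x)) xs)"
  by (rule additive_sum_list[OF act_add])

abbreviation TT where "TT \<equiv> lspan (rel_T sH cop sV act)"
abbreviation eqv (infix "\<approx>" 50) where "X \<approx> Y \<equiv> eq_T sH cop sV act X Y"

lemma eqv_def: "X \<approx> Y \<longleftrightarrow> flist X - flist Y \<in> TT" by (simp add: eq_T_def)

lemma eqv_refl[simp]: "X \<approx> X" unfolding eqv_def by (simp add: lspan_zero)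
lemma eqv_flist: "flist X = (flist Y :: _ \<Rightarrow> 'k) \<Longrightarrow> X \<approx> Y"
proof -
  assume "flist X = (flist Y :: _ \<Rightarrow> 'k)"
  hence "flist X - flist Y = (0 :: _ \<Rightarrow> 'k)" by simp
  thus ?thesis unfolding eqv_def by (simp only:) (rule lspan.lspan_zero)
qed
lemma eqv_sym: "X \<approx> Y \<Longrightarrow> Y \<approx> X"
  unfolding eqv_def using lspan_neg by fastforce
lemma eqv_trans: "X \<approx> Y \<Longrightarrow> Y \<approx> Z \<Longrightarrow> X \<approx> Z"
  unfolding eqv_def using lspan_add by fastforce
lemma eqv_append: "X \<approx> X' \<Longrightarrow> Y \<approx> Y' \<Longrightarrow> X @ Y \<approx> X' @ Y'"
proof -
  assume a: "X \<approx> X'" "Y \<approx> Y'"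
  have "(flist X - flist X') + (flist Y - flist Y') \<in> TT"
    using a unfolding eqv_def by (rule lspan_add)
  moreover have "(flist X - flist X') + (flist Y - flist Y') = flist (X @ Y) - flist (X' @ Y')"
    by simp
  ultimately show ?thesis unfolding eqv_def by (simp add: algebra_simps)
qed
lemma eqv_concat_map: "(\<And>x. x \<in> set L \<Longrightarrow> F x \<approx> G x) \<Longrightarrow> concat (map F L) \<approx> concat (map G L)"
  by (induct L) (simp_all add: eqv_append)

lemma eqv_concat_map': "L = L' \<Longrightarrow> (\<And>x. x \<in> set L \<Longrightarrow> F x \<approx> G x) \<Longrightarrow> concat (map F L) \<approx> concat (map G L')"
  using eqv_concat_map by blast

lemma fsingle_scal: "(\<lambda>z. (c::'k) * fsingle x 1 z) = fsingle x c"
  by (auto simp: fun_eq_iff fsingle_def)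

lemma relT_slot1: "G \<in> rel_slot (+) sH (\<lambda>x. (x, y, v)) \<Longrightarrow> G \<in> rel_T sH cop sV act"
  unfolding rel_T_def by (rule UnI1, rule UnI1, rule UnI1, rule UN_I[OF UNIV_I], rule UN_I[OF UNIV_I])
lemma relT_slot2: "G \<in> rel_slot (+) sH (\<lambda>y. (x, y, v)) \<Longrightarrow> G \<in> rel_T sH cop sV act"
  unfolding rel_T_def by (rule UnI1, rule UnI1, rule UnI2, rule UN_I[OF UNIV_I], rule UN_I[OF UNIV_I])
lemma relT_slot3: "G \<in> rel_slot (+) sV (\<lambda>v. (x, y, v)) \<Longrightarrow> G \<in> rel_T sH cop sV act"
  unfolding rel_T_def by (rule UnI1, rule UnI2, rule UN_I[OF UNIV_I], rule UN_I[OF UNIV_I])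
lemma relT_bal: "flist (map (\<lambda>(x, y). (f * x, g * y, v)) (cop h)) - fsingle (f, g, act h v) 1 \<in> rel_T sH cop sV act"
  unfolding rel_T_def by (rule UnI2, rule CollectI, rule exI[of _ f], rule exI[of _ g], rule exI[of _ h], rule exI[of _ v], simp)

lemma fm_scal: "flist (tscal sV c X) - (\<lambda>z. c * flist X z) \<in> TT"
proof (induct X)
  case Nil
  have "flist (tscal sV c []) - (\<lambda>z. c * flist [] z) = (0 :: 'h \<times> 'h \<times> 'v \<Rightarrow> 'k)"
    by (simp add: tscal_def fun_eq_iff)
  thus ?case by (simp only:) (rule lspan.lspan_zero)
next
  case (Cons t X)
  obtain f g v where t: "t = (f, g, v)" by (cases t) auto
  have g: "fsingle (f, g, sV c v) 1 - fsingle (f, g, v) c \<in> TT"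
    by (rule lspan_gen, rule relT_slot3, rule rel_slot_sm)
  have e1: "flist (tscal sV c (t # X)) = fsingle (f, g, sV c v) 1 + flist (tscal sV c X)"
    by (simp add: t tscal_def flist_Cons)
  have e2: "(\<lambda>z. c * flist (t # X) z) = fsingle (f, g, v) c + (\<lambda>z. c * flist X z)"
    by (simp add: t flist_Cons fun_eq_iff fsingle_def distrib_left)
  have "flist (tscal sV c (t # X)) - (\<lambda>z. c * flist (t # X) z)
      = (fsingle (f, g, sV c v) 1 - fsingle (f, g, v) c) + (flist (tscal sV c X) - (\<lambda>z. c * flist X z))"
    unfolding e1 e2 by (rule add_diff_add')
  thus ?case using lspan_add[OF g Cons] by (simp only:)
qed

lemma tscal_cong: "X \<approx> Y \<Longrightarrow> tscal sV c X \<approx> tscal sV c Y"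
proof -
  assume a: "X \<approx> Y"
  have 1: "(\<lambda>z. c * (flist X - flist Y) z) \<in> TT" using a unfolding eqv_def by (rule lspan_smult)
  have eq: "flist (tscal sV c X) - flist (tscal sV c Y) =
     (flist (tscal sV c X) - (\<lambda>z. c * flist X z)) - (flist (tscal sV c Y) - (\<lambda>z. c * flist Y z))
     + (\<lambda>z. c * (flist X - flist Y) z)"
    by (simp add: fun_eq_iff algebra_simps)
  show ?thesis unfolding eqv_def eq by (rule lspan_add[OF lspan_diff[OF fm_scal fm_scal] 1])
qed

lemma tscal_append[simp]: "tscal sV c (X @ Y) = tscal sV c X @ tscal sV c Y" by (simp add: tscal_def)
lemma tscal_concat: "tscal sV c (concat (map F L)) = concat (map (\<lambda>x. tscal sV c (F x)) L)"
  by (simp add: tscal_def map_concat comp_def)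
lemma tscal_tscal[simp]: "tscal sV c (tscal sV d X) = tscal sV (c * d) X"
  by (simp add: tscal_def sV_mult case_prod_beta)
lemma tscal_one[simp]: "tscal sV 1 X = X"
  by (simp add: tscal_def sV_one case_prod_beta)
lemma tscal_Nil[simp]: "tscal sV c [] = []" by (simp add: tscal_def)

lemma eqv_scal_iff: "X \<approx> tscal sV c Y \<longleftrightarrow> flist X - (\<lambda>z. c * flist Y z) \<in> TT"
proof
  assume "X \<approx> tscal sV c Y"
  hence "(flist X - flist (tscal sV c Y)) + (flist (tscal sV c Y) - (\<lambda>z. c * flist Y z)) \<in> TT"
    unfolding eqv_def using fm_scal lspan_add by blast
  thus "flist X - (\<lambda>z. c * flist Y z) \<in> TT" by simp
next
  assume "flist X - (\<lambda>z. c * flist Y z) \<in> TT"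
  hence "(flist X - (\<lambda>z. c * flist Y z)) - (flist (tscal sV c Y) - (\<lambda>z. c * flist Y z)) \<in> TT"
    using fm_scal lspan_diff by blast
  thus "X \<approx> tscal sV c Y" unfolding eqv_def by simp
qed

lemma eqv_app_iff: "X \<approx> Y @ Z \<longleftrightarrow> flist X - flist Y - flist Z \<in> TT"
  unfolding eqv_def by (simp add: diff_diff_eq)

lemma tscal_addl: "tscal sV (c + d) X \<approx> tscal sV c X @ tscal sV d X"
proof -
  have eq: "flist (tscal sV (c + d) X) - flist (tscal sV c X) - flist (tscal sV d X)
    = (flist (tscal sV (c + d) X) - (\<lambda>z. (c + d) * flist X z)) - (flist (tscal sV c X) - (\<lambda>z. c * flist X z))
      - (flist (tscal sV d X) - (\<lambda>z. d * flist X z))"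
    by (simp add: fun_eq_iff algebra_simps)
  show ?thesis unfolding eqv_app_iff eq by (rule lspan_diff[OF lspan_diff[OF fm_scal fm_scal] fm_scal])
qed

lemma hh_list:
  assumes E: "eq_HH sH L L'"
    and A1: "\<And>x x' y. F (x + x', y) \<approx> F (x, y) @ F (x', y)"
    and M1: "\<And>c x y. F (sH c x, y) \<approx> tscal sV c (F (x, y))"
    and A2: "\<And>x y y'. F (x, y + y') \<approx> F (x, y) @ F (x, y')"
    and M2: "\<And>c x y. F (x, sH c y) \<approx> tscal sV c (F (x, y))"
  shows "concat (map F L) \<approx> concat (map F L')"
proof -
  have "sum_list (map (\<lambda>t. flist (F t)) L) - sum_list (map (\<lambda>t. flist (F t)) L') \<in> TT"
    by (rule fmod.hh_transfer[OF E closedZ_lspan])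
       (use A1 M1 A2 M2 in \<open>simp_all add: eqv_app_iff eqv_scal_iff[symmetric]\<close>)
  thus ?thesis unfolding eqv_def sum_list_flist .
qed

lemma hhh_list:
  assumes E: "eq_HHH sH L L'"
    and A1: "\<And>x x' y z. F (x + x', y, z) \<approx> F (x, y, z) @ F (x', y, z)"
    and M1: "\<And>c x y z. F (sH c x, y, z) \<approx> tscal sV c (F (x, y, z))"
    and A2: "\<And>x y y' z. F (x, y + y', z) \<approx> F (x, y, z) @ F (x, y', z)"
    and M2: "\<And>c x y z. F (x, sH c y, z) \<approx> tscal sV c (F (x, y, z))"
    and A3: "\<And>x y z z'. F (x, y, z + z') \<approx> F (x, y, z) @ F (x, y, z')"
    and M3: "\<And>c x y z. F (x, y, sH c z) \<approx> tscal sV c (F (x, y, z))"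
  shows "concat (map F L) \<approx> concat (map F L')"
proof -
  have "sum_list (map (\<lambda>t. flist (F t)) L) - sum_list (map (\<lambda>t. flist (F t)) L') \<in> TT"
    by (rule fmod.hhh_transfer[OF E closedZ_lspan])
       (use A1 M1 A2 M2 A3 M3 in \<open>simp_all add: eqv_app_iff eqv_scal_iff[symmetric]\<close>)
  thus ?thesis unfolding eqv_def sum_list_flist .
qed

lemma t_list:
  assumes E: "X \<approx> Y"
    and A1: "\<And>x x' y v. F (x + x', y, v) \<approx> F (x, y, v) @ F (x', y, v)"
    and M1: "\<And>c x y v. F (sH c x, y, v) \<approx> tscal sV c (F (x, y, v))"
    and A2: "\<And>x y y' v. F (x, y + y', v) \<approx> F (x, y, v) @ F (x, y', v)"
    and M2: "\<And>c x y v. F (x, sH c y, v) \<approx> tscal sV c (F (x, y, v))"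
    and A3: "\<And>x y v w. F (x, y, v + w) \<approx> F (x, y, v) @ F (x, y, w)"
    and M3: "\<And>c x y v. F (x, y, sV c v) \<approx> tscal sV c (F (x, y, v))"
    and B: "\<And>f g h v. concat (map (\<lambda>(x, y). F (f * x, g * y, v)) (cop h)) \<approx> F (f, g, act h v)"
  shows "concat (map F X) \<approx> concat (map F Y)"
proof -
  have B': "sum_list (map (\<lambda>(x, y). flist (F (f * x, g * y, v))) (cop h)) - flist (F (f, g, act h v)) \<in> TT"
    for f g h v
  proof -
    have "sum_list (map (\<lambda>(x, y). flist (F (f * x, g * y, v))) (cop h))
        = (flist (concat (map (\<lambda>(x, y). F (f * x, g * y, v)) (cop h))) :: _ \<Rightarrow> 'k)"
      unfolding sum_list_flist[symmetric] by (simp add: split_def comp_def)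
    moreover have "concat (map (\<lambda>(x, y). F (f * x, g * y, v)) (cop h)) \<approx> F (f, g, act h v)" by (rule B)
    ultimately show ?thesis unfolding eqv_def by simp
  qed
  have A1': "\<And>x x' y v. flist (F (x + x', y, v)) - flist (F (x, y, v)) - flist (F (x', y, v)) \<in> TT"
    by (rule A1[unfolded eqv_app_iff])
  have A2': "\<And>x y y' v. flist (F (x, y + y', v)) - flist (F (x, y, v)) - flist (F (x, y', v)) \<in> TT"
    by (rule A2[unfolded eqv_app_iff])
  have A3': "\<And>x y v w. flist (F (x, y, v + w)) - flist (F (x, y, v)) - flist (F (x, y, w)) \<in> TT"
    by (rule A3[unfolded eqv_app_iff])
  have M1': "\<And>c x y v. flist (F (sH c x, y, v)) - (\<lambda>z. c * flist (F (x, y, v)) z) \<in> TT"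
    by (rule M1[unfolded eqv_scal_iff])
  have M2': "\<And>c x y v. flist (F (x, sH c y, v)) - (\<lambda>z. c * flist (F (x, y, v)) z) \<in> TT"
    by (rule M2[unfolded eqv_scal_iff])
  have M3': "\<And>c x y v. flist (F (x, y, sV c v)) - (\<lambda>z. c * flist (F (x, y, v)) z) \<in> TT"
    by (rule M3[unfolded eqv_scal_iff])
  have E': "flist X - flist Y \<in> TT" using E unfolding eqv_def .
  have G: "\<forall>g\<in>rel_T sH cop sV act. finite (supp g) \<and> fmod.lin (\<lambda>t. flist (F t)) g \<in> TT"
    apply (rule fmod.t_gen[OF closedZ_lspan])
    using A1' M1' A2' M2' A3' M3' B' by auto
  have "finite (supp (flist X - flist Y :: _ \<Rightarrow> 'k)) \<and> fmod.lin (\<lambda>t. flist (F t)) (flist X - flist Y) \<in> TT"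
    by (rule fmod.lspan_lin[OF closedZ_lspan G E'])
  thus ?thesis unfolding eqv_def
    by (simp add: fmod.lin_diff fmod.lin_flist sum_list_flist)
qed

end


context kmod begin

lemma hh_sum:
  assumes E: "eq_HH sHH L L'"
    and A1: "\<And>x x' y. \<Phi> (x + x') y = \<Phi> x y + \<Phi> x' y"
    and M1: "\<And>c x y. \<Phi> (sHH c x) y = sm c (\<Phi> x y)"
    and A2: "\<And>x y y'. \<Phi> x (y + y') = \<Phi> x y + \<Phi> x y'"
    and M2: "\<And>c x y. \<Phi> x (sHH c y) = sm c (\<Phi> x y)"
  shows "(\<Sum>(x, y)\<leftarrow>L. \<Phi> x y) = (\<Sum>(x, y)\<leftarrow>L'. \<Phi> x y)"
  by (rule hh_eq[OF E, where \<Phi>="\<lambda>(x, y). \<Phi> x y"]) (simp_all add: A1 M1 A2 M2)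

lemma coassoc_sum:
  assumes E: "eq_HHH sHH (concat (map (\<lambda>(x, y). map (\<lambda>(x1, x2). (x1, x2, y)) (copp x)) (copp h)))
                   (concat (map (\<lambda>(x, y). map (\<lambda>(y1, y2). (x, y1, y2)) (copp y)) (copp h)))"
    and A1: "\<And>x x' y z. \<Phi> (x + x') y z = \<Phi> x y z + \<Phi> x' y z"
    and M1: "\<And>c x y z. \<Phi> (sHH c x) y z = sm c (\<Phi> x y z)"
    and A2: "\<And>x y y' z. \<Phi> x (y + y') z = \<Phi> x y z + \<Phi> x y' z"
    and M2: "\<And>c x y z. \<Phi> x (sHH c y) z = sm c (\<Phi> x y z)"
    and A3: "\<And>x y z z'. \<Phi> x y (z + z') = \<Phi> x y z + \<Phi> x y z'"
    and M3: "\<And>c x y z. \<Phi> x y (sHH c z) = sm c (\<Phi> x y z)"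
  shows "(\<Sum>(x, y)\<leftarrow>copp h. \<Sum>(x1, x2)\<leftarrow>copp x. \<Phi> x1 x2 y) = (\<Sum>(x, y)\<leftarrow>copp h. \<Sum>(y1, y2)\<leftarrow>copp y. \<Phi> x y1 y2)"
proof -
  have "sum_list (map (\<lambda>(a, b, c). \<Phi> a b c) (concat (map (\<lambda>(x, y). map (\<lambda>(x1, x2). (x1, x2, y)) (copp x)) (copp h))))
      = sum_list (map (\<lambda>(a, b, c). \<Phi> a b c) (concat (map (\<lambda>(x, y). map (\<lambda>(y1, y2). (x, y1, y2)) (copp y)) (copp h))))"
    by (rule hhh_eq[OF E]) (simp_all add: A1 M1 A2 M2 A3 M3)
  thus ?thesis by (simp add: sum_list_concat_map comp_def split_def)
qed

end

context hctx begin

lemma hsum_H: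
  assumes E: "eq_HH sH L L'"
    and A1: "\<And>x x' y. \<Phi> (x + x') y = \<Phi> x y + \<Phi> x' y"
    and M1: "\<And>c x y. \<Phi> (sH c x) y = sH c (\<Phi> x y)"
    and A2: "\<And>x y y'. \<Phi> x (y + y') = \<Phi> x y + \<Phi> x y'"
    and M2: "\<And>c x y. \<Phi> x (sH c y) = sH c (\<Phi> x y)"
  shows "(\<Sum>(x, y)\<leftarrow>L. \<Phi> x y) = (\<Sum>(x, y)\<leftarrow>L'. \<Phi> x y)"
  by (rule Hm.hh_sum[OF E A1 M1 A2 M2])

lemma hsum_V:
  assumes E: "eq_HH sH L L'"
    and A1: "\<And>x x' y. \<Phi> (x + x') y = \<Phi> x y + \<Phi> x' y"
    and M1: "\<And>c x y. \<Phi> (sH c x) y = sV c (\<Phi> x y)"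
    and A2: "\<And>x y y'. \<Phi> x (y + y') = \<Phi> x y + \<Phi> x y'"
    and M2: "\<And>c x y. \<Phi> x (sH c y) = sV c (\<Phi> x y)"
  shows "(\<Sum>(x, y)\<leftarrow>L. \<Phi> x y) = (\<Sum>(x, y)\<leftarrow>L'. \<Phi> x y)"
  by (rule Vm.hh_sum[OF E A1 M1 A2 M2])

lemma coassoc_H:
  assumes A1: "\<And>x x' y z. \<Phi> (x + x') y z = \<Phi> x y z + \<Phi> x' y z"
    and M1: "\<And>c x y z. \<Phi> (sH c x) y z = sH c (\<Phi> x y z)"
    and A2: "\<And>x y y' z. \<Phi> x (y + y') z = \<Phi> x y z + \<Phi> x y' z"
    and M2: "\<And>c x y z. \<Phi> x (sH c y) z = sH c (\<Phi> x y z)"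
    and A3: "\<And>x y z z'. \<Phi> x y (z + z') = \<Phi> x y z + \<Phi> x y z'"
    and M3: "\<And>c x y z. \<Phi> x y (sH c z) = sH c (\<Phi> x y z)"
  shows "(\<Sum>(x, y)\<leftarrow>cop h. \<Sum>(x1, x2)\<leftarrow>cop x. \<Phi> x1 x2 y) = (\<Sum>(x, y)\<leftarrow>cop h. \<Sum>(y1, y2)\<leftarrow>cop y. \<Phi> x y1 y2)"
  by (rule Hm.coassoc_sum[OF coassoc A1 M1 A2 M2 A3 M3])

lemma coassoc_V:
  assumes A1: "\<And>x x' y z. \<Phi> (x + x') y z = \<Phi> x y z + \<Phi> x' y z"
    and M1: "\<And>c x y z. \<Phi> (sH c x) y z = sV c (\<Phi> x y z)"
    and A2: "\<And>x y y' z. \<Phi> x (y + y') z = \<Phi> x y z + \<Phi> x y' z"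
    and M2: "\<And>c x y z. \<Phi> x (sH c y) z = sV c (\<Phi> x y z)"
    and A3: "\<And>x y z z'. \<Phi> x y (z + z') = \<Phi> x y z + \<Phi> x y z'"
    and M3: "\<And>c x y z. \<Phi> x y (sH c z) = sV c (\<Phi> x y z)"
  shows "(\<Sum>(x, y)\<leftarrow>cop h. \<Sum>(x1, x2)\<leftarrow>cop x. \<Phi> x1 x2 y) = (\<Sum>(x, y)\<leftarrow>cop h. \<Sum>(y1, y2)\<leftarrow>cop y. \<Phi> x y1 y2)"
  by (rule Vm.coassoc_sum[OF coassoc A1 M1 A2 M2 A3 M3])

lemma S_one: "S 1 = 1"
proof -
  have "(\<Sum>(x, y)\<leftarrow>cop 1. S x * y) = (\<Sum>(x, y)\<leftarrow>[(1, 1)]. S x * y)"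
    by (rule hsum_H[OF cop_one]) (simp_all add: S_add S_sH algebra_simps sH_mul1[symmetric] sH_mul2[symmetric])
  thus ?thesis using anti1[of 1] by (simp add: eps_one sH_one)
qed

lemma anti3: "(\<Sum>(x, y)\<leftarrow>cop h. S y * x) = sH (eps h) 1"
proof -
  have "(\<Sum>(x, y)\<leftarrow>cop h. S y * x) = (\<Sum>(x, y)\<leftarrow>map prod.swap (cop h). S y * x)"
    by (rule hsum_H[OF cocomm]) (simp_all add: S_add S_sH algebra_simps sH_mul1[symmetric] sH_mul2[symmetric])
  also have "\<dots> = (\<Sum>(x, y)\<leftarrow>cop h. S x * y)" by (simp add: comp_def split_def)
  finally show ?thesis by (simp add: anti1)
qed

lemma anti4: "(\<Sum>(x, y)\<leftarrow>cop h. y * S x) = sH (eps h) 1"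
proof -
  have "(\<Sum>(x, y)\<leftarrow>cop h. y * S x) = (\<Sum>(x, y)\<leftarrow>map prod.swap (cop h). y * S x)"
    by (rule hsum_H[OF cocomm]) (simp_all add: S_add S_sH algebra_simps sH_mul1[symmetric] sH_mul2[symmetric])
  also have "\<dots> = (\<Sum>(x, y)\<leftarrow>cop h. x * S y)" by (simp add: comp_def split_def)
  finally show ?thesis by (simp add: anti2)
qed

end


context hctx begin

lemma sum_sH: "(\<Sum>x\<leftarrow>xs. sH c (f x)) = sH c (\<Sum>x\<leftarrow>xs. f x)"
  by (rule Hm.sm_sum_list[symmetric])

lemma sH_split: "sH (a * b) (X * Y) = sH b X * sH a Y"
proof -
  have "sH b X * sH a Y = sH b (X * sH a Y)" by (simp add: sH_mul1)
  also have "\<dots> = sH b (sH a (X * Y))" by (simp add: sH_mul2)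
  also have "\<dots> = sH (a * b) (X * Y)" by (metis sH_mult mult.commute)
  finally show ?thesis by simp
qed

lemma conv_lemma:
  "(\<Sum>(g1, g2)\<leftarrow>cop x. \<Sum>(h1, h2)\<leftarrow>cop x'. S (g1 * h1) * (g2 * h2) * K) = sH (eps x * eps x') K"
proof -
  have "(\<Sum>(g1, g2)\<leftarrow>cop x. \<Sum>(h1, h2)\<leftarrow>cop x'. S (g1 * h1) * (g2 * h2) * K)
      = (\<Sum>(u, v)\<leftarrow>concat (map (\<lambda>(x, y). map (\<lambda>(x', y'). (x * x', y * y')) (cop x')) (cop x)). S u * v * K)"
    by (simp add: sum_list_concat_map split_def comp_def)
  also have "\<dots> = (\<Sum>(u, v)\<leftarrow>cop (x * x'). S u * v * K)"
    by (rule hsum_H[OF cop_mult, symmetric])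
       (simp_all add: S_add S_sH algebra_simps sH_mul1[symmetric] sH_mul2[symmetric])
  also have "\<dots> = (\<Sum>(u, v)\<leftarrow>cop (x * x'). S u * v) * K"
    by (simp add: split_def sum_list_mult_const)
  also have "\<dots> = sH (eps x * eps x') K"
    by (simp add: anti1 eps_mult sH_mul1[symmetric])
  finally show ?thesis .
qed

lemma S_antimult: "S (g * h) = S h * S g"
proof -
  define Q where "Q = (\<lambda>g1 g2 g3 h1 h2 h3. S (g1 * h1) * (g2 * h2) * S h3 * S g3)"
  define PL where "PL = (\<lambda>a b c. \<Sum>(x', h3)\<leftarrow>cop h. \<Sum>(h1, h2)\<leftarrow>cop x'. Q a b c h1 h2 h3)"
  define PR where "PR = (\<lambda>a b c. \<Sum>(h1, y')\<leftarrow>cop h. \<Sum>(h2, h3)\<leftarrow>cop y'. Q a b c h1 h2 h3)"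
  have Qlin: "Q (a + a') b c h1 h2 h3 = Q a b c h1 h2 h3 + Q a' b c h1 h2 h3"
    "Q (sH e a) b c h1 h2 h3 = sH e (Q a b c h1 h2 h3)"
    "Q a (b + b') c h1 h2 h3 = Q a b c h1 h2 h3 + Q a b' c h1 h2 h3"
    "Q a (sH e b) c h1 h2 h3 = sH e (Q a b c h1 h2 h3)"
    "Q a b (c + c') h1 h2 h3 = Q a b c h1 h2 h3 + Q a b c' h1 h2 h3"
    "Q a b (sH e c) h1 h2 h3 = sH e (Q a b c h1 h2 h3)"
    "Q a b c (h1 + h1') h2 h3 = Q a b c h1 h2 h3 + Q a b c h1' h2 h3"
    "Q a b c (sH e h1) h2 h3 = sH e (Q a b c h1 h2 h3)"
    "Q a b c h1 (h2 + h2') h3 = Q a b c h1 h2 h3 + Q a b c h1 h2' h3"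
    "Q a b c h1 (sH e h2) h3 = sH e (Q a b c h1 h2 h3)"
    "Q a b c h1 h2 (h3 + h3') = Q a b c h1 h2 h3 + Q a b c h1 h2 h3'"
    "Q a b c h1 h2 (sH e h3) = sH e (Q a b c h1 h2 h3)"
    for a a' b b' c c' h1 h1' h2 h2' h3 h3' e
    unfolding Q_def by (simp_all add: S_add S_sH algebra_simps sH_mul1[symmetric] sH_mul2[symmetric])
  have PLR: "PL a b c = PR a b c" for a b c
    unfolding PL_def PR_def by (rule coassoc_H) (simp_all add: Qlin)
  have PLlin: "PL (a + a') b c = PL a b c + PL a' b c" "PL (sH e a) b c = sH e (PL a b c)"
    "PL a (b + b') c = PL a b c + PL a b' c" "PL a (sH e b) c = sH e (PL a b c)"
    "PL a b (c + c') = PL a b c + PL a b c'" "PL a b (sH e c) = sH e (PL a b c)"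
    for a a' b b' c c' e
    unfolding PL_def by (simp_all add: Qlin split_def sum_list_addf sum_sH)
  have step2: "(\<Sum>(x, g3)\<leftarrow>cop g. \<Sum>(g1, g2)\<leftarrow>cop x. PL g1 g2 g3) = (\<Sum>(g1, y)\<leftarrow>cop g. \<Sum>(g2, g3)\<leftarrow>cop y. PL g1 g2 g3)"
    by (rule coassoc_H) (simp_all add: PLlin)
  have lhs: "(\<Sum>(x, g3)\<leftarrow>cop g. \<Sum>(g1, g2)\<leftarrow>cop x. PL g1 g2 g3) = S h * S g"
  proof -
    have "(\<Sum>(x, g3)\<leftarrow>cop g. \<Sum>(g1, g2)\<leftarrow>cop x. PL g1 g2 g3)
      = (\<Sum>(x, g3)\<leftarrow>cop g. \<Sum>(x', h3)\<leftarrow>cop h. \<Sum>(g1, g2)\<leftarrow>cop x. \<Sum>(h1, h2)\<leftarrow>cop x'. S (g1 * h1) * (g2 * h2) * (S h3 * S g3))"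
      unfolding PL_def Q_def by (simp add: split_def sum_list_swap[of _ "cop h"] mult.assoc)
    also have "\<dots> = (\<Sum>(x, g3)\<leftarrow>cop g. \<Sum>(x', h3)\<leftarrow>cop h. sH (eps x * eps x') (S h3 * S g3))"
      by (simp add: conv_lemma)
    also have "\<dots> = (\<Sum>(x, g3)\<leftarrow>cop g. \<Sum>(x', h3)\<leftarrow>cop h. sH (eps x') (S h3) * sH (eps x) (S g3))"
      by (simp add: sH_split)
    also have "\<dots> = (\<Sum>(x', h3)\<leftarrow>cop h. sH (eps x') (S h3)) * (\<Sum>(x, g3)\<leftarrow>cop g. sH (eps x) (S g3))"
      by (simp add: split_def sum_list_const_mult sum_list_mult_const)
    also have "\<dots> = S h * S g"
    proof -
      have "S h = (\<Sum>(x', h3)\<leftarrow>cop h. sH (eps x') (S h3))"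
        using arg_cong[OF counit1[of h], of S] by (simp add: S_sum S_sH split_def)
      moreover have "S g = (\<Sum>(x', h3)\<leftarrow>cop g. sH (eps x') (S h3))"
        using arg_cong[OF counit1[of g], of S] by (simp add: S_sum S_sH split_def)
      ultimately show ?thesis by simp
    qed
    finally show ?thesis .
  qed
  have rhs: "(\<Sum>(g1, y)\<leftarrow>cop g. \<Sum>(g2, g3)\<leftarrow>cop y. PR g1 g2 g3) = S (g * h)"
  proof -
    have inner: "PR a b c = (\<Sum>(h1, y')\<leftarrow>cop h. sH (eps y') (S (a * h1) * b * S c))" for a b c
    proof -
      have "PR a b c = (\<Sum>(h1, y')\<leftarrow>cop h. S (a * h1) * b * (\<Sum>(h2, h3)\<leftarrow>cop y'. h2 * S h3) * S c)"
        unfolding PR_def Q_def by (simp add: split_def sum_list_const_mult[symmetric] sum_list_mult_const[symmetric] mult.assoc)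
      thus ?thesis by (simp add: anti2 sH_mul1[symmetric] sH_mul2[symmetric] mult.assoc)
    qed
    have "(\<Sum>(g1, y)\<leftarrow>cop g. \<Sum>(g2, g3)\<leftarrow>cop y. PR g1 g2 g3)
       = (\<Sum>(g1, y)\<leftarrow>cop g. \<Sum>(h1, y')\<leftarrow>cop h. sH (eps y') (S (g1 * h1) * (\<Sum>(g2, g3)\<leftarrow>cop y. g2 * S g3)))"
      unfolding inner by (simp add: split_def sum_list_swap[of _ "cop h"] sum_list_const_mult sum_list_mult_const
          sum_sH mult.assoc)
    also have "\<dots> = (\<Sum>(g1, y)\<leftarrow>cop g. \<Sum>(h1, y')\<leftarrow>cop h. S (sH (eps y) g1 * sH (eps y') h1))"
      by (simp add: anti2 S_sH sH_mul1[symmetric] sH_mul2[symmetric] sH_mult[symmetric] mult.commute)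
    also have "\<dots> = S ((\<Sum>(g1, y)\<leftarrow>cop g. sH (eps y) g1) * (\<Sum>(h1, y')\<leftarrow>cop h. sH (eps y') h1))"
      by (simp add: split_def S_sum sum_list_const_mult[symmetric] sum_list_mult_const[symmetric]) (rule sum_list_swap)
    also have "\<dots> = S (g * h)" by (simp add: counit2)
    finally show ?thesis .
  qed
  show ?thesis using lhs rhs step2 PLR by simp
qed

end


lemma flist_single: "flist [t] = fsingle t 1" by (simp add: flist_Cons)

lemma flist_concat: "flist (concat (map F A)) = sum_list (map (\<lambda>a. flist (F a)) A)"
  by (rule sum_list_flist[symmetric])

lemma flist_concat_app: "flist (concat (map (\<lambda>t. A t @ B t) L)) = flist (concat (map A L)) + flist (concat (map B L))"
  by (induct L) (simp_all add: algebra_simps)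

lemma concat_map_single: "map F L = concat (map (\<lambda>t. [F t]) L)"
  by (induct L) simp_all

lemma concat_map_single_prod: "concat (map (\<lambda>(x, y). [F x y]) L) = map (\<lambda>(x, y). F x y) L"
  by (induct L) auto

context hctx begin

lemmas eqv_trans_rule[trans] = eqv_trans

lemma gen_T: "G \<in> rel_T sH cop sV act \<Longrightarrow> G \<in> TT" by (rule lspan_gen)

lemma s1_add: "[(x + x', g, v)] \<approx> [(x, g, v)] @ [(x', g, v)]"
  unfolding eqv_app_iff flist_single by (rule gen_T, rule relT_slot1, rule rel_slot_ad)
lemma s2_add: "[(f, y + y', v)] \<approx> [(f, y, v)] @ [(f, y', v)]"
  unfolding eqv_app_iff flist_single by (rule gen_T, rule relT_slot2, rule rel_slot_ad)
lemma s3_add: "[(f, g, v + w)] \<approx> [(f, g, v)] @ [(f, g, w)]"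
  unfolding eqv_app_iff flist_single by (rule gen_T, rule relT_slot3, rule rel_slot_ad)
lemma s1_sc: "[(sH c x, g, v)] \<approx> [(x, g, sV c v)]"
proof -
  have "[(sH c x, g, v)] \<approx> tscal sV c [(x, g, v)]"
    unfolding eqv_scal_iff flist_single fsingle_scal by (rule gen_T, rule relT_slot1, rule rel_slot_sm)
  thus ?thesis by (simp add: tscal_def)
qed
lemma s2_sc: "[(f, sH c y, v)] \<approx> [(f, y, sV c v)]"
proof -
  have "[(f, sH c y, v)] \<approx> tscal sV c [(f, y, v)]"
    unfolding eqv_scal_iff flist_single fsingle_scal by (rule gen_T, rule relT_slot2, rule rel_slot_sm)
  thus ?thesis by (simp add: tscal_def)
qed
lemma fsingle_zero: "fsingle t (0::'k) = 0" by (simp add: fsingle_def fun_eq_iff)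
lemma s1_zero: "[(0, g, v)] \<approx> []"
proof -
  have "fsingle (sH 0 0, g, v) 1 - fsingle (0, g, v) 0 \<in> TT"
    by (rule gen_T, rule relT_slot1, rule rel_slot_sm)
  thus ?thesis unfolding eqv_def flist_single by (simp add: fsingle_zero)
qed
lemma s2_zero: "[(f, 0, v)] \<approx> []"
proof -
  have "fsingle (f, sH 0 0, v) 1 - fsingle (f, 0, v) 0 \<in> TT"
    by (rule gen_T, rule relT_slot2, rule rel_slot_sm)
  thus ?thesis unfolding eqv_def flist_single by (simp add: fsingle_zero)
qed
lemma s3_zero: "[(f, g, 0)] \<approx> []"
proof -
  have "fsingle (f, g, sV 0 0) 1 - fsingle (f, g, 0) 0 \<in> TT"
    by (rule gen_T, rule relT_slot3, rule rel_slot_sm)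
  thus ?thesis unfolding eqv_def flist_single by (simp add: fsingle_zero)
qed

lemma s1_add': "[(x + x', g, v)] \<approx> [(x, g, v), (x', g, v)]" using s1_add by simp
lemma s2_add': "[(f, y + y', v)] \<approx> [(f, y, v), (f, y', v)]" using s2_add by simp
lemma s3_add': "[(f, g, v + w)] \<approx> [(f, g, v), (f, g, w)]" using s3_add by simp

lemma s1_sum: "concat (map (\<lambda>t. [(\<phi> t, g, v)]) L) \<approx> [(sum_list (map \<phi> L), g, v)]"
proof (induct L)
  case Nil show ?case using eqv_sym[OF s1_zero] by simp
next
  case (Cons a L)
  have e: "concat (map (\<lambda>t. [(\<phi> t, g, v)]) (a # L)) = [(\<phi> a, g, v)] @ concat (map (\<lambda>t. [(\<phi> t, g, v)]) L)" by simp
  have "[(\<phi> a, g, v)] @ concat (map (\<lambda>t. [(\<phi> t, g, v)]) L) \<approx> [(\<phi> a, g, v)] @ [(sum_list (map \<phi> L), g, v)]"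
    by (rule eqv_append[OF eqv_refl Cons])
  also have "\<dots> \<approx> [(\<phi> a + sum_list (map \<phi> L), g, v)]" by (rule eqv_sym[OF s1_add])
  finally show ?case unfolding e by simp
qed
lemma s2_sum: "concat (map (\<lambda>t. [(f, \<phi> t, v)]) L) \<approx> [(f, sum_list (map \<phi> L), v)]"
proof (induct L)
  case Nil show ?case using eqv_sym[OF s2_zero] by simp
next
  case (Cons a L)
  have e: "concat (map (\<lambda>t. [(f, \<phi> t, v)]) (a # L)) = [(f, \<phi> a, v)] @ concat (map (\<lambda>t. [(f, \<phi> t, v)]) L)" by simp
  have "[(f, \<phi> a, v)] @ concat (map (\<lambda>t. [(f, \<phi> t, v)]) L) \<approx> [(f, \<phi> a, v)] @ [(f, sum_list (map \<phi> L), v)]"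
    by (rule eqv_append[OF eqv_refl Cons])
  also have "\<dots> \<approx> [(f, \<phi> a + sum_list (map \<phi> L), v)]" by (rule eqv_sym[OF s2_add])
  finally show ?case unfolding e by simp
qed
lemma s3_sum: "concat (map (\<lambda>t. [(f, g, \<phi> t)]) L) \<approx> [(f, g, sum_list (map \<phi> L))]"
proof (induct L)
  case Nil show ?case using eqv_sym[OF s3_zero] by simp
next
  case (Cons a L)
  have e: "concat (map (\<lambda>t. [(f, g, \<phi> t)]) (a # L)) = [(f, g, \<phi> a)] @ concat (map (\<lambda>t. [(f, g, \<phi> t)]) L)" by simp
  have "[(f, g, \<phi> a)] @ concat (map (\<lambda>t. [(f, g, \<phi> t)]) L) \<approx> [(f, g, \<phi> a)] @ [(f, g, sum_list (map \<phi> L))]"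
    by (rule eqv_append[OF eqv_refl Cons])
  also have "\<dots> \<approx> [(f, g, \<phi> a + sum_list (map \<phi> L))]" by (rule eqv_sym[OF s3_add])
  finally show ?case unfolding e by simp
qed

lemma bal: "concat (map (\<lambda>(x, y). [(f * x, g * y, v)]) (cop h)) \<approx> [(f, g, act h v)]"
  unfolding eqv_def flist_single concat_map_single_prod by (rule gen_T[OF relT_bal])

lemma map_eqv: "(\<And>t. t \<in> set L \<Longrightarrow> [F t] \<approx> [G t]) \<Longrightarrow> map F L \<approx> map G L"
  by (subst (1 2) concat_map_single) (rule eqv_concat_map)

lemma map_eqv_app: "(\<And>t. t \<in> set L \<Longrightarrow> [F t] \<approx> [G t] @ [H t]) \<Longrightarrow> map F L \<approx> map G L @ map H L"
proof -
  assume a: "\<And>t. t \<in> set L \<Longrightarrow> [F t] \<approx> [G t] @ [H t]"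
  have "map F L \<approx> concat (map (\<lambda>t. [G t] @ [H t]) L)"
    by (subst concat_map_single) (rule eqv_concat_map[OF a])
  also have "concat (map (\<lambda>t. [G t] @ [H t]) L) \<approx> map G L @ map H L"
    by (rule eqv_flist) (induct L, simp_all add: flist_Cons algebra_simps)
  finally show ?thesis .
qed

lemma hh_list_s2:
  assumes E: "eq_HH sH L L'"
    and A: "\<And>t t'. \<beta> (t + t') = \<beta> t + \<beta> t'" and M: "\<And>c t. \<beta> (sH c t) = sV c (\<beta> t)"
  shows "concat (map (\<lambda>(u, t). [(\<alpha>, u, \<beta> t)]) L) \<approx> concat (map (\<lambda>(u, t). [(\<alpha>, u, \<beta> t)]) L')"
  by (rule hh_list[OF E]) (simp_all add: s2_add' s2_sc A M s3_add' tscal_def)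

lemma hhh_list_s12:
  assumes E: "eq_HHH sH L L'"
    and A: "\<And>t t'. \<beta> (t + t') = \<beta> t + \<beta> t'" and M: "\<And>c t. \<beta> (sH c t) = sV c (\<beta> t)"
  shows "concat (map (\<lambda>(a, b, d). [(f * a, g * b, \<beta> d)]) L) \<approx> concat (map (\<lambda>(a, b, d). [(f * a, g * b, \<beta> d)]) L')"
  by (rule hhh_list[OF E])
     (simp_all add: s1_add' s2_add' s1_sc s2_sc A M s3_add' tscal_def distrib_left sH_mul2[symmetric])

end


lemma concat_map_concat: "concat (map F (concat xss)) = concat (map (\<lambda>xs. concat (map F xs)) xss)"
  by (induct xss) simp_all

lemma flat_aux1: "concat (map (\<lambda>(a, b, d). [G a b d]) (map (\<lambda>(y1, y2). (x, y1, y2)) ys)) = map (\<lambda>(y1, y2). G x y1 y2) ys"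
  by (induct ys) auto
lemma flat_aux1': "concat (map (\<lambda>(a, b, d). [G a b d]) (map (Pair x) ys)) = map (\<lambda>(y1, y2). G x y1 y2) ys"
  by (induct ys) auto
lemma flat_aux2: "concat (map (\<lambda>(a, b, d). [G a b d]) (map (\<lambda>(x1, x2). (x1, x2, y)) ys)) = map (\<lambda>(x1, x2). G x1 x2 y) ys"
  by (induct ys) auto
lemma RN_flat: "concat (map (\<lambda>(a, b, d). [G a b d]) (concat (map (\<lambda>(x, y). map (\<lambda>(y1, y2). (x, y1, y2)) (M y)) L)))
   = concat (map (\<lambda>(x, y). map (\<lambda>(y1, y2). G x y1 y2) (M y)) L)"
  by (induct L) (auto simp: flat_aux1 flat_aux1' simp del: map_map)
lemma LN_flat: "concat (map (\<lambda>(a, b, d). [G a b d]) (concat (map (\<lambda>(x, y). map (\<lambda>(x1, x2). (x1, x2, y)) (M x)) L)))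
   = concat (map (\<lambda>(x, y). map (\<lambda>(x1, x2). G x1 x2 y) (M x)) L)"
  by (induct L) (auto simp: flat_aux2 simp del: map_map)

lemma flat_aux3: "concat (map (\<lambda>(u, t). [G u t]) (map (\<lambda>(a', b'). (a * a', b * b')) M)) = map (\<lambda>(a', b'). G (a * a') (b * b')) M"
  by (induct M) auto
lemma flat_prod: "concat (map (\<lambda>(u, t). [G u t]) (concat (map (\<lambda>(a, b). map (\<lambda>(a', b'). (a * a', b * b')) M) L)))
   = concat (map (\<lambda>(a, b). map (\<lambda>(a', b'). G (a * a') (b * b')) M) L)"
  by (induct L) (auto simp: flat_aux3 simp del: map_map)

context hctx begin

lemma bal': "map (\<lambda>(x, y). (f * x, g * y, v)) (cop h) \<approx> [(f, g, act h v)]"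
  using bal by (simp add: concat_map_single_prod)

definition gmul :: "('v \<Rightarrow> 'v \<Rightarrow> 'v) \<Rightarrow> bool" where
  "gmul mu \<longleftrightarrow> (\<forall>a a' b. mu (a + a') b = mu a b + mu a' b) \<and> (\<forall>a b b'. mu a (b + b') = mu a b + mu a b') \<and>
    (\<forall>c a b. mu (sV c a) b = sV c (mu a b)) \<and> (\<forall>c a b. mu a (sV c b) = sV c (mu a b)) \<and>
    (\<forall>h a b. act h (mu a b) = (\<Sum>(x, y)\<leftarrow>cop h. mu (act x a) (act y b)))"

lemma s3_sum_prod: "concat (map (\<lambda>(a, b). [(f, g, \<phi> a b)]) L) \<approx> [(f, g, \<Sum>(a, b)\<leftarrow>L. \<phi> a b)]"
  using s3_sum[where \<phi>="\<lambda>(a, b). \<phi> a b" and L=L and f=f and g=g] by (simp add: split_def)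

lemma S_act_add: "act (S (t + t')) c = act (S t) c + act (S t') c" by (simp add: S_add act_addl)
lemma S_act_sH: "act (S (sH e t)) c = sV e (act (S t) c)" by (simp add: S_sH act_sH)

context
  fixes mu :: "'v \<Rightarrow> 'v \<Rightarrow> 'v"
  assumes gm: "gmul mu"
begin

lemma mu_addl: "mu (a + a') b = mu a b + mu a' b" using gm unfolding gmul_def by blast
lemma mu_addr: "mu a (b + b') = mu a b + mu a b'" using gm unfolding gmul_def by blast
lemma mu_sVl: "mu (sV c a) b = sV c (mu a b)" using gm unfolding gmul_def by blast
lemma mu_sVr: "mu a (sV c b) = sV c (mu a b)" using gm unfolding gmul_def by blast
lemma mu_act: "act h (mu a b) = (\<Sum>(x, y)\<leftarrow>cop h. mu (act x a) (act y b))" using gm unfolding gmul_def by blast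
lemma mu_suml: "mu (sum_list (map f xs)) b = sum_list (map (\<lambda>x. mu (f x) b) xs)"
  by (rule additive_sum_list[of "\<lambda>a. mu a b", OF mu_addl])
lemma mu_sumr: "mu a (sum_list (map f xs)) = sum_list (map (\<lambda>x. mu a (f x)) xs)"
  by (rule additive_sum_list[OF mu_addr])

lemma vid: "(\<Sum>(z, y2)\<leftarrow>cop h. act z (mu v (act (S y2) c))) = mu (act h v) c"
proof -
  have "(\<Sum>(z, y2)\<leftarrow>cop h. act z (mu v (act (S y2) c)))
      = (\<Sum>(z, y2)\<leftarrow>cop h. \<Sum>(z1, z2)\<leftarrow>cop z. mu (act z1 v) (act (z2 * S y2) c))"
    by (simp add: mu_act act_mult)
  also have "\<dots> = (\<Sum>(z1, w)\<leftarrow>cop h. \<Sum>(w1, w2)\<leftarrow>cop w. mu (act z1 v) (act (w1 * S w2) c))"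
    by (rule coassoc_V)
       (simp_all add: act_addl act_sH mu_addl mu_addr mu_sVl mu_sVr distrib_left distrib_right S_add S_sH
          sH_mul1[symmetric] sH_mul2[symmetric])
  also have "\<dots> = (\<Sum>(z1, w)\<leftarrow>cop h. mu (act z1 v) (act (\<Sum>(w1, w2)\<leftarrow>cop w. w1 * S w2) c))"
    by (simp add: split_def act_sum1 mu_sumr)
  also have "\<dots> = (\<Sum>(z1, w)\<leftarrow>cop h. mu (act (sH (eps w) z1) v) c)"
    by (simp add: anti2 act_sH act_one mu_sVl mu_sVr)
  also have "\<dots> = mu (act (\<Sum>(z1, w)\<leftarrow>cop h. sH (eps w) z1) v) c"
    by (simp add: split_def act_sum1 mu_suml)
  also have "\<dots> = mu (act h v) c" by (simp add: counit2)
  finally show ?thesis .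
qed

lemma rmul_bal_inner:
  "concat (map (\<lambda>(x, y). map (\<lambda>(y1, y2). (f * x, g1 * y1, mu v (act (S y2) c))) (cop y)) (cop h))
   \<approx> [(f, g1, mu (act h v) c)]"
proof -
  let ?\<beta> = "\<lambda>d. mu v (act (S d) c)"
  have "concat (map (\<lambda>(x, y). map (\<lambda>(y1, y2). (f * x, g1 * y1, mu v (act (S y2) c))) (cop y)) (cop h))
     = concat (map (\<lambda>(a, b, d). [(f * a, g1 * b, ?\<beta> d)])
          (concat (map (\<lambda>(x, y). map (\<lambda>(y1, y2). (x, y1, y2)) (cop y)) (cop h))))"
    by (simp only: RN_flat)
  also have "\<dots> \<approx> concat (map (\<lambda>(a, b, d). [(f * a, g1 * b, ?\<beta> d)])
          (concat (map (\<lambda>(x, y). map (\<lambda>(x1, x2). (x1, x2, y)) (cop x)) (cop h))))"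
    by (rule eqv_sym, rule hhh_list_s12[OF coassoc]) (simp_all add: S_act_add S_act_sH mu_addr mu_sVr)
  also have "\<dots> = concat (map (\<lambda>(z, y2). map (\<lambda>(x, y1). (f * x, g1 * y1, ?\<beta> y2)) (cop z)) (cop h))"
    by (simp only: LN_flat)
  also have "\<dots> \<approx> concat (map (\<lambda>(z, y2). [(f, g1, act z (?\<beta> y2))]) (cop h))"
    by (rule eqv_concat_map) (auto split: prod.split intro: bal')
  also have "\<dots> \<approx> [(f, g1, \<Sum>(z, y2)\<leftarrow>cop h. act z (?\<beta> y2))]"
    by (rule s3_sum_prod)
  also have "\<dots> = [(f, g1, mu (act h v) c)]" by (simp add: vid)
  finally show ?thesis .
qed

lemma rmul_step1:
  "map (\<lambda>(u, t). (f * x, u, mu v (act (S t) c))) (cop (g * y)) \<approx>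
   concat (map (\<lambda>(g1, g2). map (\<lambda>(y1, y2). (f * x, g1 * y1, mu v (act (S y2) (act (S g2) c)))) (cop y)) (cop g))"
proof -
  have "map (\<lambda>(u, t). (f * x, u, mu v (act (S t) c))) (cop (g * y))
      = concat (map (\<lambda>(u, t). [(f * x, u, mu v (act (S t) c))]) (cop (g * y)))"
    by (simp only: concat_map_single_prod)
  also have "\<dots> \<approx> concat (map (\<lambda>(u, t). [(f * x, u, mu v (act (S t) c))])
       (concat (map (\<lambda>(a, b). map (\<lambda>(a', b'). (a * a', b * b')) (cop y)) (cop g))))"
    by (rule hh_list_s2[OF cop_mult]) (simp_all add: S_act_add S_act_sH mu_addr mu_sVr)
  also have "\<dots> = concat (map (\<lambda>(g1, g2). map (\<lambda>(y1, y2). (f * x, g1 * y1, mu v (act (S (g2 * y2)) c))) (cop y)) (cop g))"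
    by (simp only: flat_prod)
  also have "\<dots> = concat (map (\<lambda>(g1, g2). map (\<lambda>(y1, y2). (f * x, g1 * y1, mu v (act (S y2) (act (S g2) c)))) (cop y)) (cop g))"
    by (simp add: S_antimult act_mult)
  finally show ?thesis .
qed

lemma rmul_bal:
  "concat (map (\<lambda>(x, y). map (\<lambda>(g1, g2). (f * x, g1, mu v (act (S g2) c))) (cop (g * y))) (cop h))
   \<approx> map (\<lambda>(g1, g2). (f, g1, mu (act h v) (act (S g2) c))) (cop g)"
proof -
  have "concat (map (\<lambda>(x, y). map (\<lambda>(g1, g2). (f * x, g1, mu v (act (S g2) c))) (cop (g * y))) (cop h))
     \<approx> concat (map (\<lambda>(x, y). concat (map (\<lambda>(g1, g2). map (\<lambda>(y1, y2). (f * x, g1 * y1, mu v (act (S y2) (act (S g2) c)))) (cop y)) (cop g))) (cop h))"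
    by (rule eqv_concat_map) (auto split: prod.split intro: rmul_step1)
  also have "\<dots> \<approx> concat (map (\<lambda>(g1, g2). concat (map (\<lambda>(x, y). map (\<lambda>(y1, y2). (f * x, g1 * y1, mu v (act (S y2) (act (S g2) c)))) (cop y)) (cop h))) (cop g))"
    by (rule eqv_flist) (simp add: flist_concat split_def, rule sum_list_swap)
  also have "\<dots> \<approx> concat (map (\<lambda>(g1, g2). [(f, g1, mu (act h v) (act (S g2) c))]) (cop g))"
    by (rule eqv_concat_map) (auto split: prod.split intro: rmul_bal_inner)
  also have "\<dots> = map (\<lambda>(g1, g2). (f, g1, mu (act h v) (act (S g2) c))) (cop g)"
    by (simp only: concat_map_single_prod)
  finally show ?thesis .
qed

lemma rmul_cong: "X \<approx> Y \<Longrightarrow> rmulT cop S act mu X c \<approx> rmulT cop S act mu Y c"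
  unfolding rmulT_def
proof (rule t_list)
  fix x x' y :: 'h and v :: 'v
  show "(case (x + x', y, v) of (f, g, b) \<Rightarrow> map (\<lambda>(g1, g2). (f, g1, mu b (act (S g2) c))) (cop g)) \<approx>
    (case (x, y, v) of (f, g, b) \<Rightarrow> map (\<lambda>(g1, g2). (f, g1, mu b (act (S g2) c))) (cop g)) @
    (case (x', y, v) of (f, g, b) \<Rightarrow> map (\<lambda>(g1, g2). (f, g1, mu b (act (S g2) c))) (cop g))"
    by simp (rule map_eqv_app, auto split: prod.split intro: s1_add s1_add')
next
  fix e :: 'k and x y :: 'h and v :: 'v
  show "(case (sH e x, y, v) of (f, g, b) \<Rightarrow> map (\<lambda>(g1, g2). (f, g1, mu b (act (S g2) c))) (cop g)) \<approx>
    tscal sV e (case (x, y, v) of (f, g, b) \<Rightarrow> map (\<lambda>(g1, g2). (f, g1, mu b (act (S g2) c))) (cop g))"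
    by (simp add: tscal_def) (rule map_eqv, auto split: prod.split intro: s1_sc)
next
  fix x y y' :: 'h and v :: 'v
  have "map (\<lambda>(g1, g2). (x, g1, mu v (act (S g2) c))) (cop (y + y'))
     = concat (map (\<lambda>(g1, g2). [(x, g1, mu v (act (S g2) c))]) (cop (y + y')))"
    by (simp only: concat_map_single_prod)
  also have "\<dots> \<approx> concat (map (\<lambda>(g1, g2). [(x, g1, mu v (act (S g2) c))]) (cop y @ cop y'))"
    by (rule hh_list_s2[OF cop_add]) (simp_all add: S_act_add S_act_sH mu_addr mu_sVr)
  also have "\<dots> = map (\<lambda>(g1, g2). (x, g1, mu v (act (S g2) c))) (cop y) @ map (\<lambda>(g1, g2). (x, g1, mu v (act (S g2) c))) (cop y')"
    by (simp add: concat_map_single_prod)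
  finally show "(case (x, y + y', v) of (f, g, b) \<Rightarrow> map (\<lambda>(g1, g2). (f, g1, mu b (act (S g2) c))) (cop g)) \<approx>
    (case (x, y, v) of (f, g, b) \<Rightarrow> map (\<lambda>(g1, g2). (f, g1, mu b (act (S g2) c))) (cop g)) @
    (case (x, y', v) of (f, g, b) \<Rightarrow> map (\<lambda>(g1, g2). (f, g1, mu b (act (S g2) c))) (cop g))" by simp
next
  fix e :: 'k and x y :: 'h and v :: 'v
  have "map (\<lambda>(g1, g2). (x, g1, mu v (act (S g2) c))) (cop (sH e y))
     = concat (map (\<lambda>(g1, g2). [(x, g1, mu v (act (S g2) c))]) (cop (sH e y)))"
    by (simp only: concat_map_single_prod)
  also have "\<dots> \<approx> concat (map (\<lambda>(g1, g2). [(x, g1, mu v (act (S g2) c))]) (map (\<lambda>(u, v). (sH e u, v)) (cop y)))"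
    by (rule hh_list_s2[OF cop_sH]) (simp_all add: S_act_add S_act_sH mu_addr mu_sVr)
  also have "\<dots> = map (\<lambda>(g1, g2). (x, sH e g1, mu v (act (S g2) c))) (cop y)"
    by (simp add: concat_map_single_prod[symmetric] split_def comp_def)
  also have "\<dots> \<approx> map (\<lambda>(g1, g2). (x, g1, sV e (mu v (act (S g2) c)))) (cop y)"
    by (rule map_eqv, auto split: prod.split intro: s2_sc)
  finally show "(case (x, sH e y, v) of (f, g, b) \<Rightarrow> map (\<lambda>(g1, g2). (f, g1, mu b (act (S g2) c))) (cop g)) \<approx>
    tscal sV e (case (x, y, v) of (f, g, b) \<Rightarrow> map (\<lambda>(g1, g2). (f, g1, mu b (act (S g2) c))) (cop g))"
    by (simp add: tscal_def split_def comp_def)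
next
  fix x y :: 'h and v w :: 'v
  show "(case (x, y, v + w) of (f, g, b) \<Rightarrow> map (\<lambda>(g1, g2). (f, g1, mu b (act (S g2) c))) (cop g)) \<approx>
    (case (x, y, v) of (f, g, b) \<Rightarrow> map (\<lambda>(g1, g2). (f, g1, mu b (act (S g2) c))) (cop g)) @
    (case (x, y, w) of (f, g, b) \<Rightarrow> map (\<lambda>(g1, g2). (f, g1, mu b (act (S g2) c))) (cop g))"
    by (simp add: mu_addl) (rule map_eqv_app, auto split: prod.split intro: s3_add s3_add')
next
  fix e :: 'k and x y :: 'h and v :: 'v
  show "(case (x, y, sV e v) of (f, g, b) \<Rightarrow> map (\<lambda>(g1, g2). (f, g1, mu b (act (S g2) c))) (cop g)) \<approx>
    tscal sV e (case (x, y, v) of (f, g, b) \<Rightarrow> map (\<lambda>(g1, g2). (f, g1, mu b (act (S g2) c))) (cop g))"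
    by (simp add: tscal_def mu_sVl split_def comp_def)
next
  fix f g h :: 'h and v :: 'v
  show "concat (map (\<lambda>(x, y). case (f * x, g * y, v) of (f, g, b) \<Rightarrow> map (\<lambda>(g1, g2). (f, g1, mu b (act (S g2) c))) (cop g)) (cop h)) \<approx>
    (case (f, g, act h v) of (f, g, b) \<Rightarrow> map (\<lambda>(g1, g2). (f, g1, mu b (act (S g2) c))) (cop g))"
    using rmul_bal by simp
qed

end

end


context hctx begin

lemma s2_sum_prod: "concat (map (\<lambda>(a, b). [(f, \<phi> a b, v)]) L) \<approx> [(f, \<Sum>(a, b)\<leftarrow>L. \<phi> a b, v)]"
  using s2_sum[where \<phi>="\<lambda>(a, b). \<phi> a b" and L=L and f=f and v=v] by (simp add: split_def)
lemma s1_sum_prod: "concat (map (\<lambda>(a, b). [(\<phi> a b, g, v)]) L) \<approx> [(\<Sum>(a, b)\<leftarrow>L. \<phi> a b, g, v)]"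
  using s1_sum[where \<phi>="\<lambda>(a, b). \<phi> a b" and L=L and g=g and v=v] by (simp add: split_def)

lemma bal1: "map (\<lambda>(x, y). (f * x, y, v)) (cop h) \<approx> [(f, 1, act h v)]"
  using bal'[of f 1 v h] by simp

lemma nf_single: "map (\<lambda>(g1, g2). (f * S g1, 1, act g2 e)) (cop g) \<approx> [(f, g, e)]"
proof -
  have "map (\<lambda>(g1, g2). (f * S g1, 1, act g2 e)) (cop g) \<approx>
        concat (map (\<lambda>(g1, g2). map (\<lambda>(k1, k2). (f * S g1 * k1, 1 * k2, e)) (cop g2)) (cop g))"
    by (subst concat_map_single_prod[symmetric], rule eqv_concat_map) (auto split: prod.split intro: eqv_sym[OF bal1])
  also have "\<dots> = concat (map (\<lambda>(a, b, d). [(f * S a * b, d, e)])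
          (concat (map (\<lambda>(x, y). map (\<lambda>(y1, y2). (x, y1, y2)) (cop y)) (cop g))))"
    by (simp only: RN_flat mult_1_left)
  also have "\<dots> \<approx> concat (map (\<lambda>(a, b, d). [(f * S a * b, d, e)])
          (concat (map (\<lambda>(x, y). map (\<lambda>(x1, x2). (x1, x2, y)) (cop x)) (cop g))))"
    by (rule eqv_sym, rule hhh_list[OF coassoc])
       (simp_all add: S_add S_sH distrib_left distrib_right sH_mul1[symmetric] sH_mul2[symmetric]
         s1_add' s2_add' s1_sc s2_sc tscal_def)
  also have "\<dots> = concat (map (\<lambda>(x, d). map (\<lambda>(a, b). (f * S a * b, d, e)) (cop x)) (cop g))"
    by (simp only: LN_flat)
  also have "\<dots> \<approx> concat (map (\<lambda>(x, d). [(f * (\<Sum>(a, b)\<leftarrow>cop x. S a * b), d, e)]) (cop g))"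
  proof (rule eqv_concat_map)
    fix t assume "t \<in> set (cop g)"
    obtain x d where t: "t = (x, d)" by (cases t) auto
    have "map (\<lambda>(a, b). (f * S a * b, d, e)) (cop x) = concat (map (\<lambda>(a, b). [(f * S a * b, d, e)]) (cop x))"
      by (simp only: concat_map_single_prod)
    also have "\<dots> \<approx> [(\<Sum>(a, b)\<leftarrow>cop x. f * S a * b, d, e)]" by (rule s1_sum_prod)
    also have "(\<Sum>(a, b)\<leftarrow>cop x. f * S a * b) = f * (\<Sum>(a, b)\<leftarrow>cop x. S a * b)"
      by (simp add: split_def sum_list_const_mult[symmetric] mult.assoc)
    finally show "(case t of (x, d) \<Rightarrow> map (\<lambda>(a, b). (f * S a * b, d, e)) (cop x)) \<approx>
        (case t of (x, d) \<Rightarrow> [(f * (\<Sum>(a, b)\<leftarrow>cop x. S a * b), d, e)])" by (simp add: t)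
  qed
  also have "\<dots> \<approx> concat (map (\<lambda>(x, d). [(f, sH (eps x) d, e)]) (cop g))"
  proof (rule eqv_concat_map)
    fix t assume "t \<in> set (cop g)"
    obtain x d where t: "t = (x, d)" by (cases t) auto
    have "[(f * (\<Sum>(a, b)\<leftarrow>cop x. S a * b), d, e)] = [(sH (eps x) f, d, e)]"
      by (simp add: anti1 sH_mul2[symmetric])
    also have "\<dots> \<approx> [(f, d, sV (eps x) e)]" by (rule s1_sc)
    also have "\<dots> \<approx> [(f, sH (eps x) d, e)]" by (rule eqv_sym[OF s2_sc])
    finally show "(case t of (x, d) \<Rightarrow> [(f * (\<Sum>(a, b)\<leftarrow>cop x. S a * b), d, e)]) \<approx>
        (case t of (x, d) \<Rightarrow> [(f, sH (eps x) d, e)])" by (simp add: t)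
  qed
  also have "\<dots> \<approx> [(f, \<Sum>(x, d)\<leftarrow>cop g. sH (eps x) d, e)]" by (rule s2_sum_prod)
  also have "\<dots> = [(f, g, e)]" by (simp add: counit1)
  finally show ?thesis .
qed

definition nfm :: "('v \<Rightarrow> 'v) \<Rightarrow> ('h \<times> 'h \<times> 'v) list \<Rightarrow> ('h \<times> 'h \<times> 'v) list" where
  "nfm \<phi> X = concat (map (\<lambda>(f, g, e). map (\<lambda>(g1, g2). (f * S g1, 1, \<phi> (act g2 e))) (cop g)) X)"

lemma nf_eqv: "nfm (\<lambda>v. v) X \<approx> X"
proof -
  have "nfm (\<lambda>v. v) X \<approx> concat (map (\<lambda>t. [t]) X)"
    unfolding nfm_def by (rule eqv_concat_map) (auto split: prod.split intro: nf_single)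
  thus ?thesis by simp
qed

context
  fixes mu :: "'v \<Rightarrow> 'v \<Rightarrow> 'v"
  assumes gm: "gmul mu"
begin

lemma rmul_one1: "map (\<lambda>(g1, g2). (f, g1, mu e (act (S g2) c))) (cop 1) \<approx> [(f, 1, mu e c)]"
proof -
  have "map (\<lambda>(g1, g2). (f, g1, mu e (act (S g2) c))) (cop 1)
      = concat (map (\<lambda>(g1, g2). [(f, g1, mu e (act (S g2) c))]) (cop 1))"
    by (simp only: concat_map_single_prod)
  also have "\<dots> \<approx> concat (map (\<lambda>(g1, g2). [(f, g1, mu e (act (S g2) c))]) [(1, 1)])"
    by (rule hh_list_s2[OF cop_one]) (simp_all add: S_act_add S_act_sH mu_addr[OF gm] mu_sVr[OF gm])
  also have "\<dots> = [(f, 1, mu e c)]" by (simp add: S_one act_one)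
  finally show ?thesis .
qed

lemma rmul_nfm: "rmulT cop S act mu (nfm \<phi> X) c \<approx> nfm (\<lambda>v. mu (\<phi> v) c) X"
proof -
  have "rmulT cop S act mu (nfm \<phi> X) c =
    concat (map (\<lambda>(f, g, e). concat (map (\<lambda>(g1, g2). map (\<lambda>(k1, k2). (f * S g1, k1, mu (\<phi> (act g2 e)) (act (S k2) c))) (cop 1)) (cop g))) X)"
    unfolding rmulT_def nfm_def by (simp add: concat_map_concat split_def comp_def)
  also have "\<dots> \<approx> concat (map (\<lambda>(f, g, e). concat (map (\<lambda>(g1, g2). [(f * S g1, 1, mu (\<phi> (act g2 e)) c)]) (cop g))) X)"
    by (rule eqv_concat_map, clarsimp split: prod.split, rule eqv_concat_map, clarsimp split: prod.split, rule rmul_one1)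
  also have "\<dots> = nfm (\<lambda>v. mu (\<phi> v) c) X"
    unfolding nfm_def by (simp only: concat_map_single_prod)
  finally show ?thesis .
qed

lemma nfm_cong: "(\<And>v. \<phi> v = \<psi> v) \<Longrightarrow> nfm \<phi> X = nfm \<psi> X"
  by (simp add: nfm_def)

lemma rmul_assoc:
  assumes assoc: "\<And>a b c. mu (mu a b) c = mu a (mu b c)"
  shows "rmulT cop S act mu (rmulT cop S act mu X c) d \<approx> rmulT cop S act mu X (mu c d)"
proof -
  have "rmulT cop S act mu (rmulT cop S act mu X c) d \<approx> rmulT cop S act mu (rmulT cop S act mu (nfm (\<lambda>v. v) X) c) d"
    by (rule rmul_cong[OF gm], rule rmul_cong[OF gm], rule eqv_sym[OF nf_eqv])
  also have "\<dots> \<approx> rmulT cop S act mu (nfm (\<lambda>v. mu v c) X) d"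
    by (rule rmul_cong[OF gm], rule rmul_nfm)
  also have "\<dots> \<approx> nfm (\<lambda>v. mu (mu v c) d) X" by (rule rmul_nfm)
  also have "\<dots> = nfm (\<lambda>v. mu v (mu c d)) X" by (rule nfm_cong, rule assoc)
  also have "\<dots> \<approx> rmulT cop S act mu (nfm (\<lambda>v. v) X) (mu c d)" by (rule eqv_sym[OF rmul_nfm])
  also have "\<dots> \<approx> rmulT cop S act mu X (mu c d)" by (rule rmul_cong[OF gm nf_eqv])
  finally show ?thesis .
qed

end

end


lemma tswap_tswap[simp]: "tswap (tswap X) = X" by (induct X) (auto simp: tswap_def)
lemma flist_map: "flist (map F L) = sum_list (map (\<lambda>t. fsingle (F t) 1) L)"
  by (simp add: flist_def comp_def)
lemma tswap_append[simp]: "tswap (X @ Y) = tswap X @ tswap Y" by (simp add: tswap_def)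
lemma tswap_tscal: "tswap (tscal sV c X) = tscal sV c (tswap X)" by (simp add: tswap_def tscal_def case_prod_beta)
lemma tswap_concat: "tswap (concat (map F L)) = concat (map (\<lambda>x. tswap (F x)) L)"
  by (simp add: tswap_def map_concat comp_def)
lemma tswap_Nil[simp]: "tswap [] = []" by (simp add: tswap_def)

context hctx begin

lemma swap_cong: "X \<approx> Y \<Longrightarrow> tswap X \<approx> tswap Y"
proof -
  assume E: "X \<approx> Y"
  have e: "tswap Z = concat (map (\<lambda>(f, g, v). [(g, f, v)]) Z)" for Z
    by (induct Z) (auto simp: tswap_def)
  show ?thesis unfolding e
  proof (rule t_list[OF E])
    fix f g h :: 'h and v :: 'v
    have "concat (map (\<lambda>(x, y). [(g * y, f * x, v)]) (cop h)) \<approx> concat (map (\<lambda>(x, y). [(g * y, f * x, v)]) (map prod.swap (cop h)))"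
      by (rule hh_list[OF cocomm])
         (simp_all add: distrib_left sH_mul2[symmetric] s1_add' s2_add' s1_sc s2_sc tscal_def)
    also have "\<dots> = concat (map (\<lambda>(x, y). [(g * x, f * y, v)]) (cop h))"
      by (simp add: comp_def split_def)
    also have "\<dots> \<approx> [(g, f, act h v)]" by (rule bal)
    finally show "concat (map (\<lambda>(x, y). case (f * x, g * y, v) of (f, g, v) \<Rightarrow> [(g, f, v)]) (cop h)) \<approx>
         (case (f, g, act h v) of (f, g, v) \<Rightarrow> [(g, f, v)])" by simp
  qed (simp_all add: s1_add' s2_add' s3_add' s1_sc s2_sc tscal_def)
qed

lemma gmul_op: "gmul mu \<Longrightarrow> gmul (\<lambda>a b. mu b a)"
proof -
  assume gm: "gmul mu"
  have "act h (mu b a) = (\<Sum>(x, y)\<leftarrow>cop h. mu (act y b) (act x a))" for h a b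
  proof -
    have "act h (mu b a) = (\<Sum>(x, y)\<leftarrow>cop h. mu (act x b) (act y a))" by (rule mu_act[OF gm])
    also have "\<dots> = (\<Sum>(x, y)\<leftarrow>map prod.swap (cop h). mu (act x b) (act y a))"
      by (rule hsum_V[OF cocomm])
         (simp_all add: act_addl act_sH mu_addl[OF gm] mu_addr[OF gm] mu_sVl[OF gm] mu_sVr[OF gm])
    also have "\<dots> = (\<Sum>(x, y)\<leftarrow>cop h. mu (act y b) (act x a))" by (simp add: comp_def split_def)
    finally show ?thesis .
  qed
  thus ?thesis using gm unfolding gmul_def by auto
qed

lemma lmul_eq: "lmulT cop S act mu a X = tswap (rmulT cop S act (\<lambda>x y. mu y x) (tswap X) a)"
  by (simp add: lmulT_def rmulT_def tswap_def map_concat comp_def split_def)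

context
  fixes mu :: "'v \<Rightarrow> 'v \<Rightarrow> 'v"
  assumes gm: "gmul mu"
begin

lemma lmul_cong: "X \<approx> Y \<Longrightarrow> lmulT cop S act mu a X \<approx> lmulT cop S act mu a Y"
  unfolding lmul_eq by (rule swap_cong, rule rmul_cong[OF gmul_op[OF gm]], rule swap_cong)

lemma lmul_assoc:
  assumes assoc: "\<And>a b c. mu (mu a b) c = mu a (mu b c)"
  shows "lmulT cop S act mu a (lmulT cop S act mu b X) \<approx> lmulT cop S act mu (mu a b) X"
proof -
  have "lmulT cop S act mu a (lmulT cop S act mu b X) =
     tswap (rmulT cop S act (\<lambda>x y. mu y x) (rmulT cop S act (\<lambda>x y. mu y x) (tswap X) b) a)"
    unfolding lmul_eq by simp
  also have "\<dots> \<approx> tswap (rmulT cop S act (\<lambda>x y. mu y x) (tswap X) (mu a b))"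
    by (rule swap_cong, rule rmul_assoc[OF gmul_op[OF gm]]) (simp add: assoc)
  also have "\<dots> = lmulT cop S act mu (mu a b) X" unfolding lmul_eq ..
  finally show ?thesis .
qed

lemma lmul_rmul:
  assumes assoc: "\<And>a b c. mu (mu a b) c = mu a (mu b c)"
  shows "lmulT cop S act mu a (rmulT cop S act mu X c) \<approx> rmulT cop S act mu (lmulT cop S act mu a X) c"
proof (rule eqv_flist)
  show "flist (lmulT cop S act mu a (rmulT cop S act mu X c)) = flist (rmulT cop S act mu (lmulT cop S act mu a X) c)"
    unfolding lmulT_def rmulT_def
    by (simp add: concat_map_concat flist_concat flist_map split_def comp_def assoc)
       (rule arg_cong[where f=sum_list], rule map_cong[OF refl], rule sum_list_swap)
qed

end

end


locale pctx = hctx sH cop eps S sV act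
  for sH :: "'k::field_char_0 \<Rightarrow> 'h::ring_1 \<Rightarrow> 'h" and cop :: "'h \<Rightarrow> ('h \<times> 'h) list"
    and eps :: "'h \<Rightarrow> 'k" and S :: "'h \<Rightarrow> 'h"
    and sV :: "'k \<Rightarrow> 'v::ab_group_add \<Rightarrow> 'v" and act :: "'h \<Rightarrow> 'v \<Rightarrow> 'v" +
  fixes V0 V1 :: "'v set" and mul :: "'v \<Rightarrow> 'v \<Rightarrow> 'v" and br :: "'v \<Rightarrow> 'v \<Rightarrow> ('h \<times> 'h \<times> 'v) list"
  assumes P: "poisson_pseudoalg sH cop eps S sV act V0 V1 mul br"
begin

lemmas PC = P[unfolded poisson_pseudoalg_def]

abbreviation vp where "vp \<equiv> Vp V0 V1"
abbreviation rm where "rm X c \<equiv> rmulT cop S act mul X c"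
abbreviation lm where "lm a X \<equiv> lmulT cop S act mul a X"

lemma mul_addl: "mul (a + a') b = mul a b + mul a' b" using PC[THEN conjunct2, THEN conjunct2, THEN conjunct2, THEN conjunct2, THEN conjunct2, THEN conjunct2, THEN conjunct2, THEN conjunct2, THEN conjunct2, THEN conjunct2, THEN conjunct2, THEN conjunct2, THEN conjunct2, THEN conjunct2, THEN conjunct2, THEN conjunct2, THEN conjunct2, THEN conjunct2, THEN conjunct2, THEN conjunct2, THEN conjunct1] by blast
lemma mul_addr: "mul a (b + b') = mul a b + mul a b'" using PC[THEN conjunct2, THEN conjunct2, THEN conjunct2, THEN conjunct2, THEN conjunct2, THEN conjunct2, THEN conjunct2, THEN conjunct2, THEN conjunct2, THEN conjunct2, THEN conjunct2, THEN conjunct2, THEN conjunct2, THEN conjunct2, THEN conjunct2, THEN conjunct2, THEN conjunct2, THEN conjunct2, THEN conjunct2, THEN conjunct2, THEN conjunct2, THEN conjunct1] by blast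
lemma mul_sVl: "mul (sV c a) b = sV c (mul a b)" using PC[THEN conjunct2, THEN conjunct2, THEN conjunct2, THEN conjunct2, THEN conjunct2, THEN conjunct2, THEN conjunct2, THEN conjunct2, THEN conjunct2, THEN conjunct2, THEN conjunct2, THEN conjunct2, THEN conjunct2, THEN conjunct2, THEN conjunct2, THEN conjunct2, THEN conjunct2, THEN conjunct2, THEN conjunct2, THEN conjunct2, THEN conjunct2, THEN conjunct2, THEN conjunct1] by blast
lemma mul_sVr: "mul a (sV c b) = sV c (mul a b)" using PC[THEN conjunct2, THEN conjunct2, THEN conjunct2, THEN conjunct2, THEN conjunct2, THEN conjunct2, THEN conjunct2, THEN conjunct2, THEN conjunct2, THEN conjunct2, THEN conjunct2, THEN conjunct2, THEN conjunct2, THEN conjunct2, THEN conjunct2, THEN conjunct2, THEN conjunct2, THEN conjunct2, THEN conjunct2, THEN conjunct2, THEN conjunct2, THEN conjunct2, THEN conjunct1] by blast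
lemma mul_assoc: "mul (mul a b) c = mul a (mul b c)" using PC[THEN conjunct2, THEN conjunct2, THEN conjunct2, THEN conjunct2, THEN conjunct2, THEN conjunct2, THEN conjunct2, THEN conjunct2, THEN conjunct2, THEN conjunct2, THEN conjunct2, THEN conjunct2, THEN conjunct2, THEN conjunct2, THEN conjunct2, THEN conjunct2, THEN conjunct2, THEN conjunct2, THEN conjunct2, THEN conjunct2, THEN conjunct2, THEN conjunct2, THEN conjunct2, THEN conjunct1] by blast
lemma mul_act: "act h (mul a b) = (\<Sum>(x, y)\<leftarrow>cop h. mul (act x a) (act y b))"
  using PC[THEN conjunct2, THEN conjunct2, THEN conjunct2, THEN conjunct2, THEN conjunct2, THEN conjunct2, THEN conjunct2, THEN conjunct2, THEN conjunct2, THEN conjunct2, THEN conjunct2, THEN conjunct2, THEN conjunct2, THEN conjunct2, THEN conjunct2, THEN conjunct2, THEN conjunct2, THEN conjunct2, THEN conjunct2, THEN conjunct2, THEN conjunct2, THEN conjunct2, THEN conjunct2, THEN conjunct2, THEN conjunct2, THEN conjunct1] by blast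
lemma mul_vp: "a \<in> vp i \<Longrightarrow> b \<in> vp j \<Longrightarrow> mul a b \<in> vp (i + j)"
  using PC[THEN conjunct2, THEN conjunct2, THEN conjunct2, THEN conjunct2, THEN conjunct2, THEN conjunct2, THEN conjunct2, THEN conjunct2, THEN conjunct2, THEN conjunct2, THEN conjunct2, THEN conjunct2, THEN conjunct2, THEN conjunct2, THEN conjunct2, THEN conjunct2, THEN conjunct2, THEN conjunct2, THEN conjunct2, THEN conjunct2, THEN conjunct2, THEN conjunct2, THEN conjunct2, THEN conjunct2, THEN conjunct1] by blast
lemma mul_comm: "a \<in> vp i \<Longrightarrow> b \<in> vp j \<Longrightarrow> mul a b = sV ((-1) ^ (i * j)) (mul b a)"
  using PC[THEN conjunct2, THEN conjunct2, THEN conjunct2, THEN conjunct2, THEN conjunct2, THEN conjunct2, THEN conjunct2, THEN conjunct2, THEN conjunct2, THEN conjunct2, THEN conjunct2, THEN conjunct2, THEN conjunct2, THEN conjunct2, THEN conjunct2, THEN conjunct2, THEN conjunct2, THEN conjunct2, THEN conjunct2, THEN conjunct2, THEN conjunct2, THEN conjunct2, THEN conjunct2, THEN conjunct2, THEN conjunct1] by blast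
lemma act_vp: "a \<in> vp i \<Longrightarrow> act h a \<in> vp i"
proof -
  assume a: "a \<in> vp i"
  have "(\<forall>h. \<forall>v\<in>V0. act h v \<in> V0) \<and> (\<forall>h. \<forall>v\<in>V1. act h v \<in> V1)"
    using PC[THEN conjunct2, THEN conjunct2, THEN conjunct2, THEN conjunct2, THEN conjunct2, THEN conjunct2, THEN conjunct2, THEN conjunct2, THEN conjunct2, THEN conjunct2, THEN conjunct2, THEN conjunct2, THEN conjunct2, THEN conjunct2, THEN conjunct2, THEN conjunct2, THEN conjunct2, THEN conjunct2, THEN conjunct1] PC[THEN conjunct2, THEN conjunct2, THEN conjunct2, THEN conjunct2, THEN conjunct2, THEN conjunct2, THEN conjunct2, THEN conjunct2, THEN conjunct2, THEN conjunct2, THEN conjunct2, THEN conjunct2, THEN conjunct2, THEN conjunct2, THEN conjunct2, THEN conjunct2, THEN conjunct2, THEN conjunct2, THEN conjunct2, THEN conjunct1] by blast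
  thus ?thesis using a by (auto simp: Vp_def split: if_splits)
qed
lemma leib: "b \<in> vp i \<Longrightarrow> c \<in> vp j \<Longrightarrow>
    br a (mul b c) \<approx> rmulT cop S act mul (br a b) c @ tscal sV ((-1) ^ (i * j)) (rmulT cop S act mul (br a c) b)"
  using PC[THEN conjunct2, THEN conjunct2, THEN conjunct2, THEN conjunct2, THEN conjunct2, THEN conjunct2, THEN conjunct2, THEN conjunct2, THEN conjunct2, THEN conjunct2, THEN conjunct2, THEN conjunct2, THEN conjunct2, THEN conjunct2, THEN conjunct2, THEN conjunct2, THEN conjunct2, THEN conjunct2, THEN conjunct2, THEN conjunct2, THEN conjunct2, THEN conjunct2, THEN conjunct2, THEN conjunct2, THEN conjunct2, THEN conjunct2, THEN conjunct2, THEN conjunct2, THEN conjunct2, THEN conjunct2, THEN conjunct2, THEN conjunct2] by blast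
lemma skew: "a \<in> vp i \<Longrightarrow> b \<in> vp j \<Longrightarrow> br b a \<approx> tscal sV (- ((-1) ^ (i * j))) (tswap (br a b))"
  using PC[THEN conjunct2, THEN conjunct2, THEN conjunct2, THEN conjunct2, THEN conjunct2, THEN conjunct2, THEN conjunct2, THEN conjunct2, THEN conjunct2, THEN conjunct2, THEN conjunct2, THEN conjunct2, THEN conjunct2, THEN conjunct2, THEN conjunct2, THEN conjunct2, THEN conjunct2, THEN conjunct2, THEN conjunct2, THEN conjunct2, THEN conjunct2, THEN conjunct2, THEN conjunct2, THEN conjunct2, THEN conjunct2, THEN conjunct2, THEN conjunct2, THEN conjunct2, THEN conjunct2, THEN conjunct2, THEN conjunct1] by blast
lemma homrep: "a \<in> vp i \<Longrightarrow> b \<in> vp j \<Longrightarrow> \<exists>X. br a b \<approx> X \<and> (\<forall>(f, g, v)\<in>set X. v \<in> vp (i + j))"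
  using PC[THEN conjunct2, THEN conjunct2, THEN conjunct2, THEN conjunct2, THEN conjunct2, THEN conjunct2, THEN conjunct2, THEN conjunct2, THEN conjunct2, THEN conjunct2, THEN conjunct2, THEN conjunct2, THEN conjunct2, THEN conjunct2, THEN conjunct2, THEN conjunct2, THEN conjunct2, THEN conjunct2, THEN conjunct2, THEN conjunct2, THEN conjunct2, THEN conjunct2, THEN conjunct2, THEN conjunct2, THEN conjunct2, THEN conjunct2, THEN conjunct2, THEN conjunct2, THEN conjunct2, THEN conjunct1] by blast

lemma gm: "gmul mul"
  unfolding gmul_def by (simp add: mul_addl mul_addr mul_sVl mul_sVr mul_act)

lemma rm_append: "rm (X @ Y) c = rm X c @ rm Y c" by (simp add: rmulT_def)
lemma lm_append: "lm a (X @ Y) = lm a X @ lm a Y" by (simp add: lmulT_def)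
lemma rm_concat: "rm (concat (map F L)) c = concat (map (\<lambda>x. rm (F x) c) L)"
  unfolding rmulT_def by (simp only: concat_map_concat map_map o_def)
lemma lm_concat: "lm a (concat (map F L)) = concat (map (\<lambda>x. lm a (F x)) L)"
  unfolding lmulT_def by (simp only: concat_map_concat map_map o_def)
lemma rm_tscal: "rm (tscal sV d X) c = tscal sV d (rm X c)"
  by (simp add: rmulT_def tscal_def map_concat comp_def split_def mul_sVl)
lemma lm_tscal: "lm a (tscal sV d X) = tscal sV d (lm a X)"
  by (simp add: lmulT_def tscal_def map_concat comp_def split_def mul_sVr)
lemma lm_sV: "lm (sV d a) X = tscal sV d (lm a X)"
  by (simp add: lmulT_def tscal_def map_concat comp_def split_def mul_sVl act_sV)

lemma SW:
  assumes X: "\<forall>(f, g, v)\<in>set X. v \<in> vp p" and c: "c \<in> vp q"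
  shows "tswap (rm X c) = tscal sV ((-1) ^ (p * q)) (lm c (tswap X))"
  using X
proof (induct X)
  case Nil show ?case by (simp add: rmulT_def lmulT_def tscal_def)
next
  case (Cons t X)
  obtain f g v where t: "t = (f, g, v)" by (cases t) auto
  have v: "v \<in> vp p" using Cons(2) t by auto
  have e: "mul v (act (S y) c) = sV ((-1) ^ (p * q)) (mul (act (S y) c) v)" for y
    by (rule mul_comm[OF v act_vp[OF c]])
  have "tswap (rm [t] c) = tscal sV ((-1) ^ (p * q)) (lm c (tswap [t]))"
    by (simp add: t rmulT_def lmulT_def tscal_def tswap_def comp_def split_def e)
  moreover have "rm (t # X) c = rm [t] c @ rm X c" using rm_append[of "[t]" X c] by simp
  moreover have "lm c (tswap (t # X)) = lm c (tswap [t]) @ lm c (tswap X)"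
    using lm_append[of c "tswap [t]" "tswap X"] by (simp add: tswap_def)
  ultimately show ?case using Cons by simp
qed

lemma vprod_single[simp]: "vprod mul [x] = x" by (simp add: vprod_def)
lemma vprod_snoc: "xs \<noteq> [] \<Longrightarrow> vprod mul (xs @ [y]) = mul (vprod mul xs) y"
  by (cases xs) (simp_all add: vprod_def)
lemma vprodO_eq: "vprodO mul xs = (if xs = [] then None else Some (vprod mul xs))"
  by (cases xs) (simp_all add: vprod_def)
lemma vprod_vp: "xs \<noteq> [] \<Longrightarrow> (\<forall>k\<in>set xs. a k \<in> vp (pa k)) \<Longrightarrow> vprod mul (map a xs) \<in> vp (sum_list (map pa xs))"
proof (induct xs rule: rev_induct)
  case Nil thus ?case by simp
next
  case (snoc x xs)
  show ?case
  proof (cases "xs = []")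
    case True thus ?thesis using snoc by simp
  next
    case False
    have "vprod mul (map a xs) \<in> vp (sum_list (map pa xs))" using snoc False by simp
    moreover have "a x \<in> vp (pa x)" using snoc by simp
    ultimately show ?thesis using False by (simp add: vprod_snoc mul_vp)
  qed
qed

lemma rm_rmulO: "rm (rmulO cop S act mul Y (vprodO mul L)) c \<approx> rmulO cop S act mul Y (vprodO mul (L @ [c]))"
proof (cases "L = []")
  case True thus ?thesis by (simp add: rmulO_def)
next
  case False
  have "rm (rm Y (vprod mul L)) c \<approx> rm Y (mul (vprod mul L) c)"
    by (rule rmul_assoc[OF gm mul_assoc])
  thus ?thesis using False by (simp add: rmulO_def vprodO_eq vprod_snoc)
qed

lemma lm_lmulO:
  assumes "\<forall>k\<in>set idx. a k \<in> vp (pa k)" and "c \<in> vp q"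
  shows "lm c (lmulO cop S act mul (vprodO mul (map a idx)) Z)
     \<approx> tscal sV ((-1) ^ (q * sum_list (map pa idx))) (lmulO cop S act mul (vprodO mul (map a idx @ [c])) Z)"
proof (cases "idx = []")
  case True thus ?thesis by (simp add: lmulO_def)
next
  case False
  let ?P = "vprod mul (map a idx)"
  have Pv: "?P \<in> vp (sum_list (map pa idx))" by (rule vprod_vp[OF False assms(1)])
  have "lm c (lm ?P Z) \<approx> lm (mul c ?P) Z" by (rule lmul_assoc[OF gm mul_assoc])
  also have "mul c ?P = sV ((-1) ^ (q * sum_list (map pa idx))) (mul ?P c)" by (rule mul_comm[OF assms(2) Pv])
  finally have "lm c (lm ?P Z) \<approx> tscal sV ((-1) ^ (q * sum_list (map pa idx))) (lm (mul ?P c) Z)"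
    by (simp add: lm_sV)
  thus ?thesis using False by (simp add: lmulO_def vprodO_eq vprod_snoc)
qed

end


context pctx begin

lemma stepR:
  assumes bv: "\<forall>j\<in>{1..n}. b j \<in> vp (pb j)" and n: "1 \<le> n"
  shows "br x (vprod mul (map b [1..<n+1])) \<approx>
    concat (map (\<lambda>j. tscal sV ((-1) ^ (pb j * (\<Sum>k=1..<j. pb k)))
       (rmulO cop S act mul (br x (b j)) (vprodO mul (map b ([1..<j] @ [j+1..<n+1]))))) [1..<n+1])"
  using n bv
proof (induct n rule: nat_induct_at_least)
  case base
  show ?case by (simp add: rmulO_def)
next
  case (Suc n)
  let ?\<sigma> = "\<lambda>j. (-1::'k) ^ (pb j * (\<Sum>k=1..<j. pb k))"
  let ?B = "vprod mul (map b [1..<n+1])"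
  let ?pB = "sum_list (map pb [1..<n+1])"
  let ?b' = "b (Suc n)"
  have bv': "\<forall>j\<in>{1..n}. b j \<in> vp (pb j)" using Suc.prems by auto
  have IH: "br x ?B \<approx> concat (map (\<lambda>j. tscal sV (?\<sigma> j)
       (rmulO cop S act mul (br x (b j)) (vprodO mul (map b ([1..<j] @ [j+1..<n+1]))))) [1..<n+1])"
    using Suc.hyps(2)[OF bv'] by simp
  have hB: "?B \<in> vp ?pB" by (rule vprod_vp) (use Suc.hyps(1) bv' in auto)
  have hb: "?b' \<in> vp (pb (Suc n))" using Suc.prems by auto
  have u: "map b [1..<Suc n + 1] = map b [1..<n+1] @ [?b']" by simp
  have ne: "map b [1..<n+1] \<noteq> []" using Suc.hyps(1) by simp
  have e1: "vprod mul (map b [1..<Suc n + 1]) = mul ?B ?b'"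
    unfolding u by (rule vprod_snoc[OF ne])
  have "br x (mul ?B ?b') \<approx> rm (br x ?B) ?b' @ tscal sV ((-1) ^ (?pB * pb (Suc n))) (rm (br x ?b') ?B)"
    by (rule leib[OF hB hb])
  also have "\<dots> \<approx> concat (map (\<lambda>j. tscal sV (?\<sigma> j)
       (rmulO cop S act mul (br x (b j)) (vprodO mul (map b ([1..<j] @ [j+1..<Suc n+1]))))) [1..<n+1])
     @ [tscal sV (?\<sigma> (Suc n)) (rmulO cop S act mul (br x ?b') (vprodO mul (map b ([1..<Suc n] @ [Suc n+1..<Suc n+1]))))] ! 0"
  proof (rule eqv_append)
    have "rm (br x ?B) ?b' \<approx> rm (concat (map (\<lambda>j. tscal sV (?\<sigma> j)
       (rmulO cop S act mul (br x (b j)) (vprodO mul (map b ([1..<j] @ [j+1..<n+1]))))) [1..<n+1])) ?b'"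
      by (rule rmul_cong[OF gm IH])
    also have "\<dots> = concat (map (\<lambda>j. tscal sV (?\<sigma> j)
       (rm (rmulO cop S act mul (br x (b j)) (vprodO mul (map b ([1..<j] @ [j+1..<n+1])))) ?b')) [1..<n+1])"
      by (simp add: rm_concat rm_tscal)
    also have "\<dots> \<approx> concat (map (\<lambda>j. tscal sV (?\<sigma> j)
       (rmulO cop S act mul (br x (b j)) (vprodO mul (map b ([1..<j] @ [j+1..<Suc n+1]))))) [1..<n+1])"
    proof (rule eqv_concat_map, rule tscal_cong)
      fix j assume j: "j \<in> set [1..<n+1]"
      have "map b ([1..<j] @ [j+1..<n+1]) @ [?b'] = map b ([1..<j] @ [j+1..<Suc n+1])"
        using j by auto
      thus "rm (rmulO cop S act mul (br x (b j)) (vprodO mul (map b ([1..<j] @ [j+1..<n+1])))) ?b' \<approx>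
          rmulO cop S act mul (br x (b j)) (vprodO mul (map b ([1..<j] @ [j+1..<Suc n+1])))"
        using rm_rmulO[of "br x (b j)" "map b ([1..<j] @ [j+1..<n+1])" ?b'] by simp
    qed
    finally show "rm (br x ?B) ?b' \<approx> concat (map (\<lambda>j. tscal sV (?\<sigma> j)
       (rmulO cop S act mul (br x (b j)) (vprodO mul (map b ([1..<j] @ [j+1..<Suc n+1]))))) [1..<n+1])" .
  next
    have s: "(\<Sum>k=1..<Suc n. pb k) = ?pB"
      by (simp add: interv_sum_list_conv_sum_set_nat)
    have v: "vprodO mul (map b ([1..<Suc n] @ [Suc n+1..<Suc n+1])) = Some ?B"
      using Suc.hyps(1) by (simp add: vprodO_eq)
    show "tscal sV ((-1) ^ (?pB * pb (Suc n))) (rm (br x ?b') ?B) \<approx>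
      [tscal sV (?\<sigma> (Suc n)) (rmulO cop S act mul (br x ?b') (vprodO mul (map b ([1..<Suc n] @ [Suc n+1..<Suc n+1]))))] ! 0"
      by (simp only: v s nth_Cons_0 rmulO_def option.case mult.commute eqv_refl)
  qed
  also have "\<dots> = concat (map (\<lambda>j. tscal sV (?\<sigma> j)
       (rmulO cop S act mul (br x (b j)) (vprodO mul (map b ([1..<j] @ [j+1..<Suc n+1]))))) [1..<Suc n+1])"
  proof -
    have u2: "[1..<Suc n + 1] = [1..<n+1] @ [Suc n]" by simp
    show ?thesis unfolding u2 by (simp only: map_append concat_append list.map concat.simps append_Nil2 nth_Cons_0)
  qed
  finally show ?case unfolding e1 .
qed

end


lemma sgn_eq: "even x = even y \<Longrightarrow> (-1::'k::ring_1) ^ x = (-1) ^ y"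
  by (simp add: minus_one_power_iff)

lemma sgn_neg: "- ((-1::'k::ring_1) ^ x) = (-1) ^ (x + 1)" by simp

lemma upt_split: "1 \<le> i \<Longrightarrow> i \<le> m \<Longrightarrow> [1..<m+1] = [1..<i] @ i # [i+1..<m+1]"
proof -
  assume a: "1 \<le> i" "i \<le> m"
  have 1: "[1..<m+1] = [1..<i] @ [i..<m+1]" using upt_add_eq_append[of 1 i "m+1-i"] a by simp
  have 2: "[i..<m+1] = i # [i+1..<m+1]" using upt_conv_Cons[of i "m+1"] a by simp
  show ?thesis using 1 2 by simp
qed

context pctx begin

lemma main:
  assumes bv: "\<forall>j\<in>{1..n}. b j \<in> vp (pb j)" and n: "1 \<le> n"
    and m: "1 \<le> m" and av: "\<forall>i\<in>{1..m}. a i \<in> vp (pa i)"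
  shows "br (vprod mul (map a [1..<m+1])) (vprod mul (map b [1..<n+1])) \<approx>
    concat (map (\<lambda>i. concat (map (\<lambda>j. tscal sV ((-1) ^ (pa i * (\<Sum>k=i+1..m. pa k) + pb j * (\<Sum>k=1..<j. pb k)))
      (lmulO cop S act mul (vprodO mul (map a ([1..<i] @ [i+1..<m+1])))
        (rmulO cop S act mul (br (a i) (b j)) (vprodO mul (map b ([1..<j] @ [j+1..<n+1])))))) [1..<n+1])) [1..<m+1])"
  using m av
proof (induct m rule: nat_induct_at_least)
  case base
  show ?case using stepR[OF bv n, of "a 1"] by (simp add: lmulO_def)
next
  case (Suc m)
  define A where "A = vprod mul (map a [1..<m+1])"
  define pA where "pA = sum_list (map pa [1..<m+1])"
  define B where "B = vprod mul (map b [1..<n+1])"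
  define pB where "pB = sum_list (map pb [1..<n+1])"
  define a' where "a' = a (Suc m)"
  define p' where "p' = pa (Suc m)"
  define Z where "Z = (\<lambda>i j. rmulO cop S act mul (br (a i) (b j)) (vprodO mul (map b ([1..<j] @ [j+1..<n+1]))))"
  define \<sigma> where "\<sigma> = (\<lambda>j. (-1::'k) ^ (pb j * (\<Sum>k=1..<j. pb k)))"
  define E where "E = (\<lambda>m' i j. (-1::'k) ^ (pa i * (\<Sum>k=i+1..m'. pa k) + pb j * (\<Sum>k=1..<j. pb k)))"
  define Ap where "Ap = (\<lambda>m' i. vprodO mul (map a ([1..<i] @ [i+1..<m'+1])))"
  define idx where "idx = (\<lambda>i. [1..<i] @ [i+1..<m+1])"
  define sg where "sg = (\<lambda>i. (-1::'k) ^ (p' * sum_list (map pa (idx i))))"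
  define js where "js = [1..<n+1]"
  have av': "\<forall>i\<in>{1..m}. a i \<in> vp (pa i)" using Suc.prems by auto
  have IH: "br A B \<approx> concat (map (\<lambda>i. concat (map (\<lambda>j. tscal sV (E m i j) (lmulO cop S act mul (Ap m i) (Z i j))) js)) [1..<m+1])"
    using Suc.hyps(2)[OF av'] unfolding A_def B_def E_def Ap_def Z_def js_def .
  have hA: "A \<in> vp pA" unfolding A_def pA_def by (rule vprod_vp) (use Suc.hyps(1) av' in auto)
  have ha: "a' \<in> vp p'" unfolding a'_def p'_def using Suc.prems by auto
  have hB: "B \<in> vp pB" unfolding B_def pB_def by (rule vprod_vp) (use n bv in auto)
  have hAa: "mul A a' \<in> vp (pA + p')" by (rule mul_vp[OF hA ha])
  have u: "map a [1..<Suc m + 1] = map a [1..<m+1] @ [a']" by (simp add: a'_def)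
  have ne: "map a [1..<m+1] \<noteq> []" using Suc.hyps(1) by simp
  have e1: "vprod mul (map a [1..<Suc m + 1]) = mul A a'"
    unfolding u A_def by (rule vprod_snoc[OF ne])
  obtain X1 where X1: "br B A \<approx> X1" "\<forall>(f, g, v)\<in>set X1. v \<in> vp (pB + pA)" using homrep[OF hB hA] by blast
  obtain X2 where X2: "br B a' \<approx> X2" "\<forall>(f, g, v)\<in>set X2. v \<in> vp (pB + p')" using homrep[OF hB ha] by blast
  define s1 where "s1 = (-1::'k) ^ ((pB + pA) * p')"
  define c3 where "c3 = - ((-1::'k) ^ (pA * pB))"
  define s2 where "s2 = (-1::'k) ^ ((pB + p') * pA)"
  define c4 where "c4 = - ((-1::'k) ^ (p' * pB))"
  define c1 where "c1 = - ((-1::'k) ^ (pB * (pA + p')))"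
  define c2 where "c2 = (-1::'k) ^ (pA * p')"
  have P1: "tswap (rm (br B A) a') \<approx> concat (map (\<lambda>i. concat (map (\<lambda>j. tscal sV (s1 * c3 * (E m i j * sg i))
       (lmulO cop S act mul (Ap (Suc m) i) (Z i j))) js)) [1..<m+1])"
  proof -
    have "tswap (rm (br B A) a') \<approx> tswap (rm X1 a')" by (rule swap_cong, rule rmul_cong[OF gm X1(1)])
    also have "\<dots> = tscal sV s1 (lm a' (tswap X1))" unfolding s1_def by (rule SW[OF X1(2) ha])
    also have "\<dots> \<approx> tscal sV s1 (lm a' (tscal sV c3 (br A B)))"
    proof (rule tscal_cong, rule lmul_cong[OF gm])
      have "tswap X1 \<approx> tswap (br B A)" by (rule swap_cong, rule eqv_sym[OF X1(1)])
      also have "\<dots> \<approx> tswap (tscal sV c3 (tswap (br A B)))" unfolding c3_def by (rule swap_cong, rule skew[OF hA hB])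
      also have "\<dots> = tscal sV c3 (br A B)" by (simp add: tswap_tscal)
      finally show "tswap X1 \<approx> tscal sV c3 (br A B)" .
    qed
    also have "\<dots> = tscal sV (s1 * c3) (lm a' (br A B))" by (simp add: lm_tscal)
    also have "\<dots> \<approx> tscal sV (s1 * c3) (lm a' (concat (map (\<lambda>i. concat (map (\<lambda>j. tscal sV (E m i j) (lmulO cop S act mul (Ap m i) (Z i j))) js)) [1..<m+1])))"
      by (rule tscal_cong, rule lmul_cong[OF gm IH])
    also have "\<dots> = tscal sV (s1 * c3) (concat (map (\<lambda>i. concat (map (\<lambda>j. tscal sV (E m i j) (lm a' (lmulO cop S act mul (Ap m i) (Z i j)))) js)) [1..<m+1]))"
      by (simp add: lm_concat lm_tscal)
    also have "\<dots> \<approx> tscal sV (s1 * c3) (concat (map (\<lambda>i. concat (map (\<lambda>j. tscal sV (E m i j) (tscal sV (sg i) (lmulO cop S act mul (Ap (Suc m) i) (Z i j)))) js)) [1..<m+1]))"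
    proof (rule tscal_cong, rule eqv_concat_map, rule eqv_concat_map, rule tscal_cong)
      fix i j assume i: "i \<in> set [1..<m+1]" and j: "j \<in> set js"
      have idxv: "\<forall>k\<in>set (idx i). a k \<in> vp (pa k)" using av' i by (auto simp: idx_def)
      have "map a (idx i) @ [a'] = map a ([1..<i] @ [i+1..<Suc m+1])" using i by (auto simp: idx_def a'_def)
      thus "lm a' (lmulO cop S act mul (Ap m i) (Z i j)) \<approx> tscal sV (sg i) (lmulO cop S act mul (Ap (Suc m) i) (Z i j))"
        using lm_lmulO[OF idxv ha, of "Z i j"] by (simp add: Ap_def idx_def sg_def)
    qed
    also have "\<dots> = concat (map (\<lambda>i. concat (map (\<lambda>j. tscal sV (s1 * c3 * (E m i j * sg i))
       (lmulO cop S act mul (Ap (Suc m) i) (Z i j))) js)) [1..<m+1])"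
      by (simp add: tscal_concat)
    finally show ?thesis .
  qed
  have P2: "tswap (rm (br B a') A) \<approx> concat (map (\<lambda>j. tscal sV (s2 * c4 * \<sigma> j)
       (lmulO cop S act mul (Ap (Suc m) (Suc m)) (Z (Suc m) j))) js)"
  proof -
    have "tswap (rm (br B a') A) \<approx> tswap (rm X2 A)" by (rule swap_cong, rule rmul_cong[OF gm X2(1)])
    also have "\<dots> = tscal sV s2 (lm A (tswap X2))" unfolding s2_def by (rule SW[OF X2(2) hA])
    also have "\<dots> \<approx> tscal sV s2 (lm A (tscal sV c4 (br a' B)))"
    proof (rule tscal_cong, rule lmul_cong[OF gm])
      have "tswap X2 \<approx> tswap (br B a')" by (rule swap_cong, rule eqv_sym[OF X2(1)])
      also have "\<dots> \<approx> tswap (tscal sV c4 (tswap (br a' B)))" unfolding c4_def by (rule swap_cong, rule skew[OF ha hB])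
      also have "\<dots> = tscal sV c4 (br a' B)" by (simp add: tswap_tscal)
      finally show "tswap X2 \<approx> tscal sV c4 (br a' B)" .
    qed
    also have "\<dots> = tscal sV (s2 * c4) (lm A (br a' B))" by (simp add: lm_tscal)
    also have "\<dots> \<approx> tscal sV (s2 * c4) (lm A (concat (map (\<lambda>j. tscal sV (\<sigma> j) (Z (Suc m) j)) js)))"
    proof (rule tscal_cong, rule lmul_cong[OF gm])
      show "br a' B \<approx> concat (map (\<lambda>j. tscal sV (\<sigma> j) (Z (Suc m) j)) js)"
        using stepR[OF bv n, of a'] unfolding B_def \<sigma>_def Z_def js_def a'_def by (simp add: rmulO_def)
    qed
    also have "\<dots> = concat (map (\<lambda>j. tscal sV (s2 * c4 * \<sigma> j) (lm A (Z (Suc m) j))) js)"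
      by (simp add: lm_concat lm_tscal tscal_concat)
    also have "\<dots> = concat (map (\<lambda>j. tscal sV (s2 * c4 * \<sigma> j) (lmulO cop S act mul (Ap (Suc m) (Suc m)) (Z (Suc m) j))) js)"
      using Suc.hyps(1) by (simp add: Ap_def A_def lmulO_def vprodO_eq)
    finally show ?thesis .
  qed
  have "br (mul A a') B \<approx> tscal sV c1 (tswap (br B (mul A a')))" unfolding c1_def by (rule skew[OF hB hAa])
  also have "\<dots> \<approx> tscal sV c1 (tswap (rm (br B A) a' @ tscal sV c2 (rm (br B a') A)))"
    unfolding c2_def by (rule tscal_cong, rule swap_cong, rule leib[OF hA ha])
  also have "\<dots> = tscal sV c1 (tswap (rm (br B A) a')) @ tscal sV (c1 * c2) (tswap (rm (br B a') A))"
    by (simp add: tswap_tscal)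
  also have "\<dots> \<approx> tscal sV c1 (concat (map (\<lambda>i. concat (map (\<lambda>j. tscal sV (s1 * c3 * (E m i j * sg i))
       (lmulO cop S act mul (Ap (Suc m) i) (Z i j))) js)) [1..<m+1]))
     @ tscal sV (c1 * c2) (concat (map (\<lambda>j. tscal sV (s2 * c4 * \<sigma> j)
       (lmulO cop S act mul (Ap (Suc m) (Suc m)) (Z (Suc m) j))) js))"
    by (rule eqv_append; rule tscal_cong; rule P1 P2)
  also have "\<dots> = concat (map (\<lambda>i. concat (map (\<lambda>j. tscal sV (E (Suc m) i j)
       (lmulO cop S act mul (Ap (Suc m) i) (Z i j))) js)) [1..<Suc m+1])"
  proof -
    have C1: "c1 * (s1 * c3 * (E m i j * sg i)) = E (Suc m) i j" if i1: "1 \<le> i" and i2: "i \<le> m" for i j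
    proof -
      define Si where "Si = (\<Sum>k=i+1..m. pa k)"
      define Xj where "Xj = pb j * (\<Sum>k=1..<j. pb k)"
      define Pi where "Pi = sum_list (map pa (idx i))"
      have Si': "(\<Sum>k=i+1..Suc m. pa k) = Si + p'" using i2 by (simp add: p'_def Si_def)
      have hPA: "pA = pa i + Pi" using upt_split[OF i1 i2] by (simp add: pA_def idx_def Pi_def)
      have "c1 * (s1 * c3 * (E m i j * sg i)) = (-1) ^ (pB * (pA + p') + (pB + pA) * p' + pA * pB + (pa i * Si + Xj) + p' * Pi)"
        unfolding c1_def s1_def c3_def E_def sg_def Si_def Xj_def Pi_def by (simp add: power_add mult_ac)
      also have "\<dots> = (-1) ^ (pa i * (Si + p') + Xj)"
        by (rule sgn_eq) (simp add: hPA even_add even_mult_iff algebra_simps;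
            cases "even Pi"; cases "even p'"; cases "even pB"; simp)
      also have "\<dots> = E (Suc m) i j" unfolding E_def Si' Xj_def by simp
      finally show ?thesis .
    qed
    have C2: "c1 * c2 * (s2 * c4 * \<sigma> j) = E (Suc m) (Suc m) j" for j
    proof -
      define Xj where "Xj = pb j * (\<Sum>k=1..<j. pb k)"
      have "c1 * c2 * (s2 * c4 * \<sigma> j) = (-1) ^ (pB * (pA + p') + pA * p' + (pB + p') * pA + p' * pB + Xj)"
        unfolding c1_def c2_def s2_def c4_def \<sigma>_def Xj_def by (simp add: power_add mult_ac)
      also have "\<dots> = (-1) ^ Xj"
        by (rule sgn_eq) (simp add: even_add even_mult_iff algebra_simps)
      also have "\<dots> = E (Suc m) (Suc m) j" unfolding E_def Xj_def by simp
      finally show ?thesis .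
    qed
    have u2: "[1..<Suc m+1] = [1..<m+1] @ [Suc m]" by simp
    have p1: "tscal sV c1 (concat (map (\<lambda>i. concat (map (\<lambda>j. tscal sV (s1 * c3 * (E m i j * sg i))
       (lmulO cop S act mul (Ap (Suc m) i) (Z i j))) js)) [1..<m+1]))
      = concat (map (\<lambda>i. concat (map (\<lambda>j. tscal sV (E (Suc m) i j)
       (lmulO cop S act mul (Ap (Suc m) i) (Z i j))) js)) [1..<m+1])"
      unfolding tscal_concat
      by (rule arg_cong[where f=concat], rule map_cong[OF refl], rule arg_cong[where f=concat], rule map_cong[OF refl])
         (auto simp: C1)
    have p2: "tscal sV (c1 * c2) (concat (map (\<lambda>j. tscal sV (s2 * c4 * \<sigma> j)
       (lmulO cop S act mul (Ap (Suc m) (Suc m)) (Z (Suc m) j))) js))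
      = concat (map (\<lambda>j. tscal sV (E (Suc m) (Suc m) j)
       (lmulO cop S act mul (Ap (Suc m) (Suc m)) (Z (Suc m) j))) js)"
      by (simp add: tscal_concat C2)
    show ?thesis unfolding u2 p1 p2 by simp
  qed
  finally show ?case unfolding e1 A_def B_def E_def Ap_def Z_def js_def .
qed

end


lemma compr: "concat [T i j. i \<leftarrow> xs, j \<leftarrow> ys] = concat (map (\<lambda>i. concat (map (\<lambda>j. T i j) ys)) xs)"
  by (induct xs) simp_all

theorem proposition4p9:
  fixes sH :: "'k::field_char_0 \<Rightarrow> 'h::ring_1 \<Rightarrow> 'h"
    and cop :: "'h \<Rightarrow> ('h \<times> 'h) list" and eps :: "'h \<Rightarrow> 'k" and S :: "'h \<Rightarrow> 'h"
    and sV :: "'k \<Rightarrow> 'v::ab_group_add \<Rightarrow> 'v" and act :: "'h \<Rightarrow> 'v \<Rightarrow> 'v"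
    and V0 V1 :: "'v set" and mul :: "'v \<Rightarrow> 'v \<Rightarrow> 'v"
    and br :: "'v \<Rightarrow> 'v \<Rightarrow> ('h \<times> 'h \<times> 'v) list"
    and a b :: "nat \<Rightarrow> 'v" and pa pb :: "nat \<Rightarrow> nat" and m n :: nat
  assumes "cocomm_hopf sH cop eps S"
    and "poisson_pseudoalg sH cop eps S sV act V0 V1 mul br"
    and "1 \<le> m" and "1 \<le> n"
    and "\<forall>i\<in>{1..m}. a i \<in> Vp V0 V1 (pa i)"
    and "\<forall>j\<in>{1..n}. b j \<in> Vp V0 V1 (pb j)"
  shows "eq_T sH cop sV act
     (br (vprod mul (map a [1..<m+1])) (vprod mul (map b [1..<n+1])))
     (concat [tscal sV ((-1::'k) ^ (pa i * (\<Sum>k=i+1..m. pa k) + pb j * (\<Sum>k=1..<j. pb k)))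
                (lmulO cop S act mul (vprodO mul (map a ([1..<i] @ [i+1..<m+1])))
                  (rmulO cop S act mul (br (a i) (b j)) (vprodO mul (map b ([1..<j] @ [j+1..<n+1]))))).
              i \<leftarrow> [1..<m+1], j \<leftarrow> [1..<n+1]])"
proof -
  have PP: "poisson_pseudoalg sH cop eps S sV act V0 V1 mul br" by fact
  note PC = PP[unfolded poisson_pseudoalg_def]
  interpret pctx sH cop eps S sV act V0 V1 mul br
  proof unfold_locales
    show "cocomm_hopf sH cop eps S" by fact
    show "poisson_pseudoalg sH cop eps S sV act V0 V1 mul br" by fact
  qed (use PC in \<open>simp_all\<close>)
  have "br (vprod mul (map a [1..<m+1])) (vprod mul (map b [1..<n+1])) \<approx>
    concat (map (\<lambda>i. concat (map (\<lambda>j. tscal sV ((-1) ^ (pa i * (\<Sum>k=i+1..m. pa k) + pb j * (\<Sum>k=1..<j. pb k)))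
      (lmulO cop S act mul (vprodO mul (map a ([1..<i] @ [i+1..<m+1])))
        (rmulO cop S act mul (br (a i) (b j)) (vprodO mul (map b ([1..<j] @ [j+1..<n+1])))))) [1..<n+1])) [1..<m+1])"
    by (rule main) (use assms in auto)
  thus ?thesis unfolding compr .
qed


end
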